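(* Let $\Omega\subset\mathbb{R}^d$ be a bounded open set, $q\ge1$ an integer, $\lambda\in\mathbb{R}\setminus\{0\}$, $k\in C^q(\overline{\Omega}\times\overline{\Omega})$ and $f\in C^q(\overline{\Omega})$ nonzero. Suppose $\lambda$ does not belong to the spectrum of $\mathcal{K}\colon C^0(\overline{\Omega})\to C^0(\overline{\Omega})$, $(\mathcal{K}v)(x)=\int_\Omega k(x,y)v(y)\,dy$, and let $u\in C^q(\overline{\Omega})$ be the solution of $\lambda u-\mathcal{K}u=f$. Let $\{(Y_h,\vec w_h)\}_{h>0}$ be a quadrature scheme of order $q$ which is stable. Then for all sufficiently small $h>0$ the linear system \[ \lambda\hat u_{h,i}-\sum_{j=1}^{|Y_h|}w_{h,j}k(y_{h,i},y_{h,j})\hat u_{h,j}=f(y_{h,i}),\quad i=1,\dots,|Y_h|, \] has a unique solution, the condition number of its system matrix $\lambda I_h-K_hW_h$ is bounded uniformly with respect to $h$, and there is a constant $C>0$ independent of $h$ and $u$ such that \[ \|u-u_h\|_\infty\le C h^q\|u\|_{C^q(\overline{\Omega})},\qquad\text{where } u_h(x)=\frac1\lambda\Big(\sum_{i=1}^{|Y_h|}w_{h,i}k(x,y_{h,i})\hat u_{h,i}+f(x)\Big). \]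
   Context: $C^q(\overline{\Omega})$ is the space of functions whose partial derivatives up to order $q$ exist on $\Omega$ and extend continuously to $\overline{\Omega}$, with norm $\|v\|_{C^q(\overline{\Omega})}=\sum_{|\alpha|\le q}\frac1{\alpha!}\max_{\overline\Omega}|\partial^\alpha v|$; $\|v\|_\infty=\max_{\overline\Omega}|v|$. A quadrature scheme is a family $\{(Y_h,\vec w_h)\}_{h>0}$ of finite sets $Y_h=\{y_{h,i}\}\subset\overline{\Omega}$ and weights $\vec w_h\in\mathbb{R}^{|Y_h|}$ with $|Y_h|\to\infty$ as $h\to0^+$. It has order $q$ if there is $C_w$ with $|\int_\Omega v-\sum_i w_{h,i}v(y_{h,i})|\le C_wh^q\|v\|_{C^q(\overline{\Omega})}$ for all $h>0$ and $v\in C^q(\overline{\Omega})$; it is stable if $\|\vec w_h\|_1\le C_Q$ for all $h>0$. $I_h$ is the identity of size $|Y_h|$, $(K_h)_{ij}=k(y_{h,i},y_{h,j})$, $W_h=\mathrm{diag}(\vec w_h)$. *)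

theory Defs
  imports "HOL-Analysis.Analysis"
begin

definition has_pd :: "'a::euclidean_space \<Rightarrow> ('a \<Rightarrow> real) \<Rightarrow> 'a \<Rightarrow> bool" where
  "has_pd b f x \<longleftrightarrow> (\<exists>D. ((\<lambda>t. f (x + t *\<^sub>R b)) has_real_derivative D) (at 0))"

definition pd :: "'a::euclidean_space \<Rightarrow> ('a \<Rightarrow> real) \<Rightarrow> 'a \<Rightarrow> real" where
  "pd b f x = deriv (\<lambda>t. f (x + t *\<^sub>R b)) 0"

fun pds :: "'a::euclidean_space list \<Rightarrow> ('a \<Rightarrow> real) \<Rightarrow> 'a \<Rightarrow> real" where
  "pds [] f = f"
| "pds (b # bs) f = pd b (pds bs f)"

fun pds_exist :: "'a::euclidean_space set \<Rightarrow> 'a list \<Rightarrow> ('a \<Rightarrow> real) \<Rightarrow> bool" where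
  "pds_exist \<Omega> [] f = True"
| "pds_exist \<Omega> (b # bs) f = (pds_exist \<Omega> bs f \<and> (\<forall>x\<in>\<Omega>. has_pd b (pds bs f) x))"

definition Cq :: "'a::euclidean_space set \<Rightarrow> nat \<Rightarrow> ('a \<Rightarrow> real) \<Rightarrow> bool" where
  "Cq \<Omega> q v \<longleftrightarrow> continuous_on (closure \<Omega>) v \<and>
     (\<forall>bs. set bs \<subseteq> Basis \<and> bs \<noteq> [] \<and> length bs \<le> q \<longrightarrow>
        pds_exist \<Omega> bs v \<and>
        (\<exists>g. continuous_on (closure \<Omega>) g \<and> (\<forall>x\<in>\<Omega>. g x = pds bs v x)))"

definition multi_idx :: "nat \<Rightarrow> ('a::euclidean_space \<Rightarrow> nat) set" where
  "multi_idx q = {\<alpha>. (\<forall>b. b \<notin> Basis \<longrightarrow> \<alpha> b = 0) \<and> (\<Sum>b\<in>Basis. \<alpha> b) \<le> q}"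

definition mi_fact :: "('a::euclidean_space \<Rightarrow> nat) \<Rightarrow> real" where
  "mi_fact \<alpha> = (\<Prod>b\<in>Basis. fact (\<alpha> b))"

text \<open>partial^alpha v, taking the derivatives in some order (irrelevant for C^q functions).\<close>
definition pdm :: "('a::euclidean_space \<Rightarrow> nat) \<Rightarrow> ('a \<Rightarrow> real) \<Rightarrow> 'a \<Rightarrow> real" where
  "pdm \<alpha> v = pds (SOME bs. set bs \<subseteq> Basis \<and> (\<forall>b. count_list bs b = \<alpha> b)) v"

text \<open>The C^q norm: sum over |alpha|<=q of (1/alpha!) max over the closure of |partial^alpha v|
  (the max of the continuous extension over the closure equals the sup over Omega).\<close>
definition Cq_norm :: "'a::euclidean_space set \<Rightarrow> nat \<Rightarrow> ('a \<Rightarrow> real) \<Rightarrow> real" where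
  "Cq_norm \<Omega> q v = (\<Sum>\<alpha>\<in>multi_idx q. (1 / mi_fact \<alpha>) * (SUP x\<in>\<Omega>. \<bar>pdm \<alpha> v x\<bar>))"

definition sup_norm :: "'a::euclidean_space set \<Rightarrow> ('a \<Rightarrow> real) \<Rightarrow> real" where
  "sup_norm \<Omega> v = (SUP x\<in>closure \<Omega>. \<bar>v x\<bar>)"

definition Kop :: "'a::euclidean_space set \<Rightarrow> ('a \<times> 'a \<Rightarrow> real) \<Rightarrow> ('a \<Rightarrow> real) \<Rightarrow> 'a \<Rightarrow> real" where
  "Kop \<Omega> k v x = integral \<Omega> (\<lambda>y. k (x, y) * v y)"

definition not_in_spectrum :: "'a::euclidean_space set \<Rightarrow> ('a \<times> 'a \<Rightarrow> real) \<Rightarrow> real \<Rightarrow> bool" where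
  "not_in_spectrum \<Omega> k lam \<longleftrightarrow>
     (\<forall>g. continuous_on (closure \<Omega>) g \<longrightarrow>
        (\<exists>v. continuous_on (closure \<Omega>) v \<and> (\<forall>x\<in>closure \<Omega>. lam * v x - Kop \<Omega> k v x = g x))) \<and>
     (\<forall>v. continuous_on (closure \<Omega>) v \<and> (\<forall>x\<in>closure \<Omega>. lam * v x - Kop \<Omega> k v x = 0)
        \<longrightarrow> (\<forall>x\<in>closure \<Omega>. v x = 0)) \<and>
     (\<exists>C. \<forall>v. continuous_on (closure \<Omega>) v \<longrightarrow>
        sup_norm \<Omega> v \<le> C * sup_norm \<Omega> (\<lambda>x. lam * v x - Kop \<Omega> k v x))"

definition quad_scheme :: "'a::euclidean_space set \<Rightarrow> (real \<Rightarrow> nat) \<Rightarrow> (real \<Rightarrow> nat \<Rightarrow> 'a) \<Rightarrow> bool" where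
  "quad_scheme \<Omega> N y \<longleftrightarrow>
     (\<forall>h>0. (\<forall>i<N h. y h i \<in> closure \<Omega>) \<and> inj_on (y h) {..<N h}) \<and>
     filterlim N at_top (at_right 0)"

definition quad_order :: "'a::euclidean_space set \<Rightarrow> nat \<Rightarrow> (real \<Rightarrow> nat) \<Rightarrow> (real \<Rightarrow> nat \<Rightarrow> 'a)
    \<Rightarrow> (real \<Rightarrow> nat \<Rightarrow> real) \<Rightarrow> bool" where
  "quad_order \<Omega> q N y w \<longleftrightarrow> (\<exists>Cw. \<forall>h>0. \<forall>v. Cq \<Omega> q v \<longrightarrow>
     \<bar>integral \<Omega> v - (\<Sum>i<N h. w h i * v (y h i))\<bar> \<le> Cw * h ^ q * Cq_norm \<Omega> q v)"

definition quad_stable :: "(real \<Rightarrow> nat) \<Rightarrow> (real \<Rightarrow> nat \<Rightarrow> real) \<Rightarrow> bool" where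
  "quad_stable N w \<longleftrightarrow> (\<exists>CQ. \<forall>h>0. (\<Sum>i<N h. \<bar>w h i\<bar>) \<le> CQ)"

section \<open>n x n matrices as functions on {..<n} x {..<n}\<close>

definition mat_mult :: "nat \<Rightarrow> (nat \<Rightarrow> nat \<Rightarrow> real) \<Rightarrow> (nat \<Rightarrow> nat \<Rightarrow> real) \<Rightarrow> nat \<Rightarrow> nat \<Rightarrow> real" where
  "mat_mult n A B i j = (\<Sum>l<n. A i l * B l j)"

definition is_inverse :: "nat \<Rightarrow> (nat \<Rightarrow> nat \<Rightarrow> real) \<Rightarrow> (nat \<Rightarrow> nat \<Rightarrow> real) \<Rightarrow> bool" where
  "is_inverse n A B \<longleftrightarrow> (\<forall>i<n. \<forall>j<n.
     mat_mult n A B i j = (if i = j then 1 else 0) \<and> mat_mult n B A i j = (if i = j then 1 else 0))"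

text \<open>Matrix norm induced by the max-norm (maximal absolute row sum).\<close>
definition norm_inf :: "nat \<Rightarrow> (nat \<Rightarrow> nat \<Rightarrow> real) \<Rightarrow> real" where
  "norm_inf n A = Max ((\<lambda>i. \<Sum>j<n. \<bar>A i j\<bar>) ` {..<n})"

definition cond_inf :: "nat \<Rightarrow> (nat \<Rightarrow> nat \<Rightarrow> real) \<Rightarrow> real" where
  "cond_inf n A = norm_inf n A * norm_inf n (SOME B. is_inverse n A B)"

definition nys_mat :: "real \<Rightarrow> ('a \<times> 'a \<Rightarrow> real) \<Rightarrow> (nat \<Rightarrow> 'a) \<Rightarrow> (nat \<Rightarrow> real) \<Rightarrow> nat \<Rightarrow> nat \<Rightarrow> real" where
  "nys_mat lam k y w i j = (if i = j then lam else 0) - k (y i, y j) * w j"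

end

theory Submission
  imports Defs "Jordan_Normal_Form.Determinant"
begin

lemma has_pd_deriv:
  assumes "has_pd b f x"
  shows "((\<lambda>t. f (x + t *\<^sub>R b)) has_real_derivative pd b f x) (at 0)"
  using assms unfolding has_pd_def pd_def by (metis DERIV_imp_deriv)

lemma has_pd_intro:
  assumes "((\<lambda>t. f (x + t *\<^sub>R b)) has_real_derivative D) (at 0)"
  shows "has_pd b f x" "pd b f x = D"
  using assms unfolding has_pd_def pd_def by (auto intro: DERIV_imp_deriv)

lemma ev_line_in_open:
  fixes x b :: "'a::real_normed_vector"
  assumes "open S" "x \<in> S"
  shows "eventually (\<lambda>t::real. x + t *\<^sub>R b \<in> S) (nhds 0)"
proof -
  have "((\<lambda>t::real. x + t *\<^sub>R b) \<longlongrightarrow> x + 0 *\<^sub>R b) (nhds 0)"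
    by (intro tendsto_intros) (simp add: tendsto_ident_at filterlim_ident)
  then have "((\<lambda>t::real. x + t *\<^sub>R b) \<longlongrightarrow> x) (nhds 0)" by simp
  then show ?thesis using assms by (metis topological_tendstoD)
qed

lemma pd_cong:
  fixes f g :: "'a::euclidean_space \<Rightarrow> real"
  assumes "open S" "x \<in> S" "\<And>z. z \<in> S \<Longrightarrow> f z = g z"
  shows "has_pd b f x = has_pd b g x" "pd b f x = pd b g x"
proof -
  have ev: "eventually (\<lambda>t::real. f (x + t *\<^sub>R b) = g (x + t *\<^sub>R b)) (nhds 0)"
    using ev_line_in_open[OF assms(1,2), of b] by eventually_elim (use assms(3) in auto)
  have "\<And>D. ((\<lambda>t. f (x + t *\<^sub>R b)) has_real_derivative D) (at 0) = ((\<lambda>t. g (x + t *\<^sub>R b)) has_real_derivative D) (at 0)"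
    by (rule DERIV_cong_ev[OF refl ev refl])
  then show "has_pd b f x = has_pd b g x" unfolding has_pd_def by simp
  show "pd b f x = pd b g x" unfolding pd_def by (rule deriv_cong_ev[OF ev refl])
qed

lemma pds_cong:
  fixes F G :: "'a::euclidean_space \<Rightarrow> real"
  assumes "open S" "\<And>z. z \<in> S \<Longrightarrow> F z = G z"
  shows "z \<in> S \<Longrightarrow> pds l F z = pds l G z"
proof (induction l arbitrary: z)
  case Nil then show ?case using assms by simp
next
  case (Cons b l)
  show ?case using pd_cong(2)[OF assms(1) Cons.prems, of "pds l F" "pds l G" b] Cons.IH by simp
qed

lemma pds_exist_cong:
  fixes F G :: "'a::euclidean_space \<Rightarrow> real"
  assumes "open S" "\<And>z. z \<in> S \<Longrightarrow> F z = G z"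
  shows "pds_exist S l F = pds_exist S l G"
proof (induction l)
  case Nil then show ?case by simp
next
  case (Cons b l)
  have "\<And>z. z \<in> S \<Longrightarrow> has_pd b (pds l F) z = has_pd b (pds l G) z"
    by (rule pd_cong(1)[OF assms(1)]) (auto intro: pds_cong[OF assms])
  then show ?case using Cons.IH by auto
qed

lemma pds_append: "pds (l @ m) F = pds l (pds m F)"
  by (induction l) auto

lemma pds_exist_append: "pds_exist S (l @ m) F \<Longrightarrow> pds_exist S m F"
  by (induction l) auto

lemma has_pd_shift:
  fixes f :: "'a::euclidean_space \<Rightarrow> real"
  assumes "has_pd b f (x0 + s0 *\<^sub>R b)"
  shows "((\<lambda>s. f (x0 + s *\<^sub>R b)) has_real_derivative pd b f (x0 + s0 *\<^sub>R b)) (at s0)"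
proof -
  let ?p = "x0 + s0 *\<^sub>R b"
  have d: "((\<lambda>t. f (?p + t *\<^sub>R b)) has_real_derivative pd b f ?p) (at (s0 + - s0))"
    using has_pd_deriv[OF assms] by simp
  have eq: "(\<lambda>s. f (?p + (s + - s0) *\<^sub>R b)) = (\<lambda>s. f (x0 + s *\<^sub>R b))"
    by (rule ext) (simp add: algebra_simps)
  show ?thesis using d unfolding DERIV_shift eq .
qed

section \<open>Leibniz rule\<close>

fun splits :: "'b list \<Rightarrow> ('b list \<times> 'b list) list" where
  "splits [] = [([], [])]"
| "splits (b # bs) = concat (map (\<lambda>(l, r). [(b # l, r), (l, b # r)]) (splits bs))"

lemma splits_mset: "(l, r) \<in> set (splits bs) \<Longrightarrow> mset l + mset r = mset bs"
  by (induction bs arbitrary: l r) auto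

lemma splits_length: "length (splits bs) = 2 ^ length bs"
proof (induction bs)
  case Nil then show ?case by simp
next
  case (Cons b bs)
  have "\<And>xs. length (concat (map (\<lambda>(l, r). [(b # l, r), (l, b # r)]) xs)) = 2 * length xs"
    subgoal for xs by (induction xs) auto done
  then show ?case using Cons by simp
qed

lemma deriv_sum_prod_list:
  fixes F G :: "'b \<Rightarrow> 'a::euclidean_space \<Rightarrow> real"
  assumes "\<And>l r. (l, r) \<in> set xs \<Longrightarrow> has_pd b (F l) z \<and> has_pd b (G r) z"
  shows "((\<lambda>t. \<Sum>(l, r)\<leftarrow>xs. F l (z + t *\<^sub>R b) * G r (z + t *\<^sub>R b)) has_real_derivative
      (\<Sum>(l, r)\<leftarrow>xs. pd b (F l) z * G r z + F l z * pd b (G r) z)) (at 0)"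
  using assms
proof (induction xs)
  case Nil then show ?case by simp
next
  case (Cons a xs)
  obtain l r where a: "a = (l, r)" by force
  have hl: "has_pd b (F l) z" and hr: "has_pd b (G r) z" using Cons.prems[of l r] a by auto
  have d1: "((\<lambda>t. F l (z + t *\<^sub>R b) * G r (z + t *\<^sub>R b)) has_real_derivative
      pd b (F l) z * G r z + F l z * pd b (G r) z) (at 0)"
    using DERIV_mult[OF has_pd_deriv[OF hl] has_pd_deriv[OF hr]] by (simp add: mult.commute)
  have pr: "\<And>l r. (l, r) \<in> set xs \<Longrightarrow> has_pd b (F l) z \<and> has_pd b (G r) z"
    using Cons.prems by auto
  show ?case unfolding a using DERIV_add[OF d1 Cons.IH[OF pr]] by simp
qed

lemma sum_splits_step:
  "(\<Sum>(l, r)\<leftarrow>concat (map (\<lambda>(l, r). [(b # l, r), (l, b # r)]) xs). pds l f z * pds r g z)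
   = (\<Sum>(l, r)\<leftarrow>xs. pd b (pds l f) z * pds r g z + pds l f z * pd b (pds r g) z)"
  by (induction xs) auto

lemma leibniz:
  fixes f g :: "'a::euclidean_space \<Rightarrow> real"
  assumes S: "open S" and ex: "\<And>l. mset l \<subseteq># mset bs \<Longrightarrow> pds_exist S l f \<and> pds_exist S l g"
  shows "pds_exist S bs (\<lambda>z. f z * g z) \<and>
    (\<forall>z\<in>S. pds bs (\<lambda>z. f z * g z) z = (\<Sum>(l, r)\<leftarrow>splits bs. pds l f z * pds r g z))"
  using ex
proof (induction bs)
  case Nil then show ?case by simp
next
  case (Cons b bs)
  have ex': "pds_exist S l f \<and> pds_exist S l g" if "mset l \<subseteq># mset bs" for l
  proof -
    have "mset bs \<subseteq># mset (b # bs)" by simp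
    then have "mset l \<subseteq># mset (b # bs)" using that by (meson subset_mset.order_trans)
    then show ?thesis using Cons.prems by blast
  qed
  note IH = Cons.IH[OF ex']
  define P where "P = (\<lambda>z. \<Sum>(l, r)\<leftarrow>splits bs. pds l f z * pds r g z)"
  have eq: "\<And>z. z \<in> S \<Longrightarrow> pds bs (\<lambda>z. f z * g z) z = P z" using IH unfolding P_def by auto
  have main: "has_pd b (pds bs (\<lambda>z. f z * g z)) z \<and> pd b (pds bs (\<lambda>z. f z * g z)) z
      = (\<Sum>(l, r)\<leftarrow>splits (b # bs). pds l f z * pds r g z)" if z: "z \<in> S" for z
  proof -
    have hp: "has_pd b (pds l f) z \<and> has_pd b (pds r g) z" if lr: "(l, r) \<in> set (splits bs)" for l r
    proof -
      have m: "mset l + mset r = mset bs" by (rule splits_mset[OF lr])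
      have "mset (b # l) \<subseteq># mset (b # bs)" "mset (b # r) \<subseteq># mset (b # bs)"
        using m by (auto simp flip: m)
      then have "pds_exist S (b # l) f" "pds_exist S (b # r) g" using Cons.prems by blast+
      then show ?thesis using z by auto
    qed
    have d: "((\<lambda>t. P (z + t *\<^sub>R b)) has_real_derivative
      (\<Sum>(l, r)\<leftarrow>splits bs. pd b (pds l f) z * pds r g z + pds l f z * pd b (pds r g) z)) (at 0)"
      unfolding P_def using deriv_sum_prod_list[of "splits bs" b "\<lambda>l. pds l f" z "\<lambda>r. pds r g"] hp
      by simp
    have "has_pd b P z" "pd b P z = (\<Sum>(l, r)\<leftarrow>splits bs. pd b (pds l f) z * pds r g z + pds l f z * pd b (pds r g) z)"
      using has_pd_intro[OF d] by auto
    moreover have "has_pd b (pds bs (\<lambda>z. f z * g z)) z = has_pd b P z"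
       "pd b (pds bs (\<lambda>z. f z * g z)) z = pd b P z"
      using pd_cong[OF S z eq] by auto
    ultimately show ?thesis by (simp add: sum_splits_step)
  qed
  show ?case using IH main by auto
qed

section \<open>Schwarz\<close>

lemma mvt_box:
  fixes F :: "'a::euclidean_space \<Rightarrow> real"
  assumes s: "s > 0"
    and inS: "\<And>\<sigma> \<tau>. 0 \<le> \<sigma> \<Longrightarrow> \<sigma> \<le> s \<Longrightarrow> 0 \<le> \<tau> \<Longrightarrow> \<tau> \<le> s \<Longrightarrow> x + \<sigma> *\<^sub>R b + \<tau> *\<^sub>R c \<in> S"
    and h1: "\<forall>z\<in>S. has_pd b F z" and h2: "\<forall>z\<in>S. has_pd c (pd b F) z"
  shows "\<exists>\<xi> \<eta>. 0 \<le> \<xi> \<and> \<xi> \<le> s \<and> 0 \<le> \<eta> \<and> \<eta> \<le> s \<and>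
     F (x + s *\<^sub>R b + s *\<^sub>R c) - F (x + s *\<^sub>R b) - F (x + s *\<^sub>R c) + F x
       = s * s * pd c (pd b F) (x + \<xi> *\<^sub>R b + \<eta> *\<^sub>R c)"
proof -
  define \<phi> where "\<phi> = (\<lambda>\<sigma>. F ((x + s *\<^sub>R c) + \<sigma> *\<^sub>R b) - F (x + \<sigma> *\<^sub>R b))"
  have d\<phi>: "(\<phi> has_real_derivative (pd b F ((x + s *\<^sub>R c) + \<sigma> *\<^sub>R b) - pd b F (x + \<sigma> *\<^sub>R b))) (at \<sigma>)"
    if "0 \<le> \<sigma>" "\<sigma> \<le> s" for \<sigma>
  proof -
    have a: "(x + s *\<^sub>R c) + \<sigma> *\<^sub>R b \<in> S" using inS[of \<sigma> s] that s by (simp add: algebra_simps)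
    have b: "x + \<sigma> *\<^sub>R b \<in> S" using inS[of \<sigma> 0] that s by simp
    show ?thesis unfolding \<phi>_def
      by (intro DERIV_diff has_pd_shift) (use a b h1 in auto)
  qed
  obtain \<xi> where \<xi>: "0 < \<xi>" "\<xi> < s" and
    e1: "\<phi> s - \<phi> 0 = (s - 0) * (pd b F ((x + s *\<^sub>R c) + \<xi> *\<^sub>R b) - pd b F (x + \<xi> *\<^sub>R b))"
    using MVT2[of 0 s \<phi>, OF s d\<phi>] by auto
  define \<psi> where "\<psi> = (\<lambda>\<tau>. pd b F ((x + \<xi> *\<^sub>R b) + \<tau> *\<^sub>R c))"
  have d\<psi>: "(\<psi> has_real_derivative pd c (pd b F) ((x + \<xi> *\<^sub>R b) + \<tau> *\<^sub>R c)) (at \<tau>)"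
    if "0 \<le> \<tau>" "\<tau> \<le> s" for \<tau>
  proof -
    have a: "(x + \<xi> *\<^sub>R b) + \<tau> *\<^sub>R c \<in> S" using inS[of \<xi> \<tau>] that \<xi> by simp
    show ?thesis unfolding \<psi>_def by (rule has_pd_shift) (use a h2 in auto)
  qed
  obtain \<eta> where \<eta>: "0 < \<eta>" "\<eta> < s" and
    e2: "\<psi> s - \<psi> 0 = (s - 0) * pd c (pd b F) ((x + \<xi> *\<^sub>R b) + \<eta> *\<^sub>R c)"
    using MVT2[of 0 s \<psi>, OF s d\<psi>] by auto
  have "F (x + s *\<^sub>R b + s *\<^sub>R c) - F (x + s *\<^sub>R b) - F (x + s *\<^sub>R c) + F x = \<phi> s - \<phi> 0"
    unfolding \<phi>_def by (simp add: algebra_simps)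
  also have "\<dots> = s * (\<psi> s - \<psi> 0)" using e1 unfolding \<psi>_def by (simp add: algebra_simps)
  also have "\<dots> = s * s * pd c (pd b F) (x + \<xi> *\<^sub>R b + \<eta> *\<^sub>R c)" using e2 by simp
  finally show ?thesis using \<xi> \<eta> by (intro exI[of _ \<xi>] exI[of _ \<eta>]) auto
qed

lemma schwarz:
  fixes F :: "'a::euclidean_space \<Rightarrow> real"
  assumes S: "open S" and x: "x \<in> S"
    and h1: "\<forall>z\<in>S. has_pd b F z" and h2: "\<forall>z\<in>S. has_pd c F z"
    and h3: "\<forall>z\<in>S. has_pd c (pd b F) z" and h4: "\<forall>z\<in>S. has_pd b (pd c F) z"
    and c1: "continuous_on S (pd c (pd b F))" and c2: "continuous_on S (pd b (pd c F))"
  shows "pd c (pd b F) x = pd b (pd c F) x"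
proof (rule ccontr)
  let ?A = "pd c (pd b F) x" and ?B = "pd b (pd c F) x"
  assume ne: "?A \<noteq> ?B"
  define e where "e = \<bar>?A - ?B\<bar> / 3"
  have e: "e > 0" using ne unfolding e_def by simp
  obtain d1 where d1: "d1 > 0" "\<And>z. z \<in> S \<Longrightarrow> dist z x < d1 \<Longrightarrow> dist (pd c (pd b F) z) ?A < e"
    using c1 x e unfolding continuous_on_iff by metis
  obtain d2 where d2: "d2 > 0" "\<And>z. z \<in> S \<Longrightarrow> dist z x < d2 \<Longrightarrow> dist (pd b (pd c F) z) ?B < e"
    using c2 x e unfolding continuous_on_iff by metis
  obtain r where r: "r > 0" "ball x r \<subseteq> S" using S x open_contains_ball by blast
  define d where "d = min r (min d1 d2)"
  have d: "d > 0" "d \<le> r" "d \<le> d1" "d \<le> d2" using r d1 d2 unfolding d_def by auto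
  define s where "s = d / (2 * (norm b + norm c + 1))"
  have pos: "0 < norm b + norm c + 1" by (intro add_nonneg_pos add_nonneg_nonneg norm_ge_zero) simp
  then have s: "s > 0" unfolding s_def using d by (intro divide_pos_pos) auto
  have close: "dist (x + \<sigma> *\<^sub>R b + \<tau> *\<^sub>R c) x < d" if "0 \<le> \<sigma>" "\<sigma> \<le> s" "0 \<le> \<tau>" "\<tau> \<le> s" for \<sigma> \<tau>
  proof -
    have "dist (x + \<sigma> *\<^sub>R b + \<tau> *\<^sub>R c) x = norm (\<sigma> *\<^sub>R b + \<tau> *\<^sub>R c)"
      by (simp add: dist_norm)
    also have "\<dots> \<le> \<sigma> * norm b + \<tau> * norm c"
      using norm_triangle_ineq[of "\<sigma> *\<^sub>R b" "\<tau> *\<^sub>R c"] that by simp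
    also have "\<dots> \<le> s * norm b + s * norm c"
      using that by (intro add_mono mult_right_mono) auto
    also have "\<dots> < s * (2 * (norm b + norm c + 1))"
    proof -
      have "0 \<le> s * norm b" "0 \<le> s * norm c" using s by auto
      moreover have "s * (2 * (norm b + norm c + 1)) = 2 * (s * norm b) + 2 * (s * norm c) + 2 * s"
        by (simp add: algebra_simps)
      ultimately show ?thesis using s by linarith
    qed
    also have "\<dots> = d" unfolding s_def using pos by simp
    finally show ?thesis .
  qed
  have inS: "x + \<sigma> *\<^sub>R b + \<tau> *\<^sub>R c \<in> S" if "0 \<le> \<sigma>" "\<sigma> \<le> s" "0 \<le> \<tau>" "\<tau> \<le> s" for \<sigma> \<tau>
    using close[OF that] d r by (auto simp: dist_commute)
  have inS': "x + \<sigma> *\<^sub>R c + \<tau> *\<^sub>R b \<in> S" if "0 \<le> \<sigma>" "\<sigma> \<le> s" "0 \<le> \<tau>" "\<tau> \<le> s" for \<sigma> \<tau>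
    using inS[of \<tau> \<sigma>] that by (simp add: algebra_simps)
  obtain \<xi> \<eta> where xe: "0 \<le> \<xi>" "\<xi> \<le> s" "0 \<le> \<eta>" "\<eta> \<le> s" and
    E1: "F (x + s *\<^sub>R b + s *\<^sub>R c) - F (x + s *\<^sub>R b) - F (x + s *\<^sub>R c) + F x
       = s * s * pd c (pd b F) (x + \<xi> *\<^sub>R b + \<eta> *\<^sub>R c)"
    using mvt_box[OF s inS h1 h3] by blast
  obtain \<xi>' \<eta>' where xe': "0 \<le> \<xi>'" "\<xi>' \<le> s" "0 \<le> \<eta>'" "\<eta>' \<le> s" and
    E2: "F (x + s *\<^sub>R c + s *\<^sub>R b) - F (x + s *\<^sub>R c) - F (x + s *\<^sub>R b) + F x
       = s * s * pd b (pd c F) (x + \<xi>' *\<^sub>R c + \<eta>' *\<^sub>R b)"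
    using mvt_box[OF s inS' h2 h4] by blast
  have eqv: "pd c (pd b F) (x + \<xi> *\<^sub>R b + \<eta> *\<^sub>R c) = pd b (pd c F) (x + \<xi>' *\<^sub>R c + \<eta>' *\<^sub>R b)"
    using E1 E2 s by (simp add: algebra_simps)
  have p1: "\<bar>pd c (pd b F) (x + \<xi> *\<^sub>R b + \<eta> *\<^sub>R c) - ?A\<bar> < e"
    using d1(2)[OF inS[OF xe]] close[OF xe] d by (simp add: dist_real_def)
  have p2: "\<bar>pd b (pd c F) (x + \<xi>' *\<^sub>R c + \<eta>' *\<^sub>R b) - ?B\<bar> < e"
    using d2(2)[OF inS'[OF xe']] close[of \<eta>' \<xi>'] xe' d by (simp add: dist_real_def algebra_simps)
  have "\<bar>?A - ?B\<bar> < 2 * e" using p1 p2 eqv by linarith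
  then show False unfolding e_def by simp
qed

definition cq_like :: "'a::euclidean_space set \<Rightarrow> nat \<Rightarrow> ('a \<Rightarrow> real) \<Rightarrow> bool" where
  "cq_like \<Omega> q f \<longleftrightarrow> continuous_on (closure \<Omega>) f \<and> (\<forall>l. set l \<subseteq> Basis \<and> length l \<le> q \<longrightarrow>
     pds_exist \<Omega> l f \<and> (\<exists>g. continuous_on (closure \<Omega>) g \<and> (\<forall>z\<in>\<Omega>. g z = pds l f z)))"

lemma Cq_cq_like: "Cq \<Omega> q f \<longleftrightarrow> cq_like \<Omega> q f"
proof
  assume C: "Cq \<Omega> q f"
  have c: "continuous_on (closure \<Omega>) f" using C unfolding Cq_def by auto
  have "\<forall>l. set l \<subseteq> Basis \<and> length l \<le> q \<longrightarrow>
     pds_exist \<Omega> l f \<and> (\<exists>g. continuous_on (closure \<Omega>) g \<and> (\<forall>z\<in>\<Omega>. g z = pds l f z))"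
  proof (intro allI impI)
    fix l :: "'a list" assume l: "set l \<subseteq> Basis \<and> length l \<le> q"
    show "pds_exist \<Omega> l f \<and> (\<exists>g. continuous_on (closure \<Omega>) g \<and> (\<forall>z\<in>\<Omega>. g z = pds l f z))"
    proof (cases "l = []")
      case True then show ?thesis using C unfolding Cq_def by auto
    next
      case False then show ?thesis using C l unfolding Cq_def by auto
    qed
  qed
  then show "cq_like \<Omega> q f" using c unfolding cq_like_def by blast
next
  assume "cq_like \<Omega> q f" then show "Cq \<Omega> q f" unfolding cq_like_def Cq_def by auto
qed

lemma cq_like_cont_open:
  assumes "cq_like \<Omega> q u" "set l \<subseteq> Basis" "length l \<le> q"
  shows "continuous_on \<Omega> (pds l u)"
proof -
  obtain g where g: "continuous_on (closure \<Omega>) g" "\<forall>z\<in>\<Omega>. g z = pds l u z"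
    using assms unfolding cq_like_def by blast
  have "continuous_on \<Omega> g" using g(1) closure_subset continuous_on_subset by blast
  then show ?thesis using g(2) continuous_on_eq by fastforce
qed

lemma cq_like_ex:
  assumes "cq_like \<Omega> q u" "set l \<subseteq> Basis" "length l \<le> q"
  shows "pds_exist \<Omega> l u"
  using assms unfolding cq_like_def by blast

lemma pds_swap:
  assumes S: "open \<Omega>" and u: "cq_like \<Omega> q u"
    and st: "set (l @ c # b # m) \<subseteq> Basis" "length (l @ c # b # m) \<le> q" and z: "z \<in> \<Omega>"
  shows "pds (l @ c # b # m) u z = pds (l @ b # c # m) u z"
proof -
  let ?F = "pds m u"
  have e1: "pds_exist \<Omega> (c # b # m) u" by (rule cq_like_ex[OF u]) (use st in auto)
  have e2: "pds_exist \<Omega> (b # c # m) u" by (rule cq_like_ex[OF u]) (use st in auto)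
  have c1: "continuous_on \<Omega> (pds (c # b # m) u)" by (rule cq_like_cont_open[OF u]) (use st in auto)
  have c2: "continuous_on \<Omega> (pds (b # c # m) u)" by (rule cq_like_cont_open[OF u]) (use st in auto)
  have eq: "pds (c # b # m) u x = pds (b # c # m) u x" if "x \<in> \<Omega>" for x
    using schwarz[OF S that, of b ?F c] e1 e2 c1 c2 by simp
  have "pds (l @ c # b # m) u z = pds l (pds (c # b # m) u) z" by (simp add: pds_append)
  also have "\<dots> = pds l (pds (b # c # m) u) z" by (rule pds_cong[OF S eq z])
  also have "\<dots> = pds (l @ b # c # m) u z" by (simp add: pds_append)
  finally show ?thesis .
qed

lemma pds_move:
  assumes S: "open \<Omega>" and u: "cq_like \<Omega> q u"
  shows "\<forall>l. set (l @ xs @ b # m) \<subseteq> Basis \<and> length (l @ xs @ b # m) \<le> q \<longrightarrow>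
     (\<forall>z\<in>\<Omega>. pds (l @ xs @ b # m) u z = pds (l @ b # xs @ m) u z)"
proof (induction xs)
  case Nil then show ?case by simp
next
  case (Cons c xs)
  show ?case
  proof (intro allI impI ballI)
    fix l z assume st: "set (l @ (c # xs) @ b # m) \<subseteq> Basis \<and> length (l @ (c # xs) @ b # m) \<le> q"
      and z: "z \<in> \<Omega>"
    have "pds (l @ (c # xs) @ b # m) u z = pds ((l @ [c]) @ xs @ b # m) u z" by simp
    also have "\<dots> = pds ((l @ [c]) @ b # xs @ m) u z"
      using Cons.IH st z by (metis append.assoc append_Cons append_Nil)
    also have "\<dots> = pds (l @ c # b # (xs @ m)) u z" by simp
    also have "\<dots> = pds (l @ b # c # (xs @ m)) u z"
      by (rule pds_swap[OF S u _ _ z]) (use st in auto)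
    finally show "pds (l @ (c # xs) @ b # m) u z = pds (l @ b # (c # xs) @ m) u z" by simp
  qed
qed

lemma pds_perm:
  assumes S: "open \<Omega>" and u: "cq_like \<Omega> q u"
  shows "mset s = mset r \<Longrightarrow> set r \<subseteq> Basis \<Longrightarrow> length r \<le> q \<Longrightarrow> z \<in> \<Omega> \<Longrightarrow> pds s u z = pds r u z"
proof (induction r arbitrary: s z)
  case Nil then show ?case by simp
next
  case (Cons b r)
  have ms: "mset s = mset (b # r)" by (rule Cons.prems(1))
  have "b \<in> set s" using mset_eq_setD[OF ms] by simp
  then obtain s1 s2 where s: "s = s1 @ b # s2" by (meson split_list)
  have ss: "set s = set (b # r)" "length s = length (b # r)"
    using mset_eq_setD[OF ms] mset_eq_length[OF ms] by auto
  have c1: "set ([] @ s1 @ b # s2) \<subseteq> Basis \<and> length ([] @ s1 @ b # s2) \<le> q"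
    using ss s Cons.prems(2,3) by simp
  have mv: "pds ([] @ s1 @ b # s2) u z = pds ([] @ b # s1 @ s2) u z"
    using pds_move[OF S u, of s1 b s2, rule_format, of "[]", OF c1 Cons.prems(4)] .
  have ms2: "mset (s1 @ s2) = mset r" using ms s by simp
  have rB: "set r \<subseteq> Basis" "length r \<le> q" using Cons.prems(2,3) by auto
  have "pds s u z = pd b (pds (s1 @ s2) u) z" using mv s by simp
  also have "\<dots> = pd b (pds r u) z"
  proof (rule pd_cong(2)[OF S Cons.prems(4)])
    fix x assume x: "x \<in> \<Omega>"
    show "pds (s1 @ s2) u x = pds r u x" by (rule Cons.IH[OF ms2 rB x])
  qed
  finally show ?case by simp
qed

lemma cq_like_bound:
  assumes b: "bounded \<Omega>" and u: "cq_like \<Omega> q f"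
  shows "\<exists>M. \<forall>l. set l \<subseteq> Basis \<and> length l \<le> q \<longrightarrow> (\<forall>z\<in>\<Omega>. \<bar>pds l f z\<bar> \<le> M)"
proof -
  let ?L = "{l :: 'a list. set l \<subseteq> Basis \<and> length l \<le> q}"
  have fin: "finite ?L" by (rule finite_lists_length_le) simp
  have "\<forall>l\<in>?L. \<exists>M. \<forall>z\<in>\<Omega>. \<bar>pds l f z\<bar> \<le> M"
  proof
    fix l assume "l \<in> ?L"
    then obtain g where g: "continuous_on (closure \<Omega>) g" "\<forall>z\<in>\<Omega>. g z = pds l f z"
      using u unfolding cq_like_def by blast
    have "compact (g ` closure \<Omega>)" using g(1) b by (intro compact_continuous_image compact_closure[THEN iffD2])
    then obtain M where M: "\<forall>y\<in>g ` closure \<Omega>. norm y \<le> M" using compact_imp_bounded bounded_iff by metis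
    have "\<forall>z\<in>\<Omega>. \<bar>pds l f z\<bar> \<le> M" using M g(2) closure_subset by fastforce
    then show "\<exists>M. \<forall>z\<in>\<Omega>. \<bar>pds l f z\<bar> \<le> M" ..
  qed
  then obtain Mf where Mf: "\<forall>l\<in>?L. \<forall>z\<in>\<Omega>. \<bar>pds l f z\<bar> \<le> Mf l" by metis
  have "\<forall>l\<in>?L. \<forall>z\<in>\<Omega>. \<bar>pds l f z\<bar> \<le> (\<Sum>l\<in>?L. \<bar>Mf l\<bar>)"
  proof (intro ballI)
    fix l z assume l: "l \<in> ?L" and z: "z \<in> \<Omega>"
    have "\<bar>Mf l\<bar> \<le> (\<Sum>l\<in>?L. \<bar>Mf l\<bar>)" by (rule member_le_sum[OF l _ fin]) auto
    then show "\<bar>pds l f z\<bar> \<le> (\<Sum>l\<in>?L. \<bar>Mf l\<bar>)" using Mf l z by fastforce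
  qed
  then show ?thesis by blast
qed

section \<open>Multi-indices\<close>

lemma exists_list_counts:
  assumes "finite B"
  shows "(\<forall>b. b \<notin> B \<longrightarrow> \<alpha> b = 0) \<Longrightarrow> \<exists>s. set s \<subseteq> B \<and> (\<forall>b. count_list s b = \<alpha> b)"
  using assms
proof (induction B arbitrary: \<alpha> rule: finite_induct)
  case empty
  then have "\<forall>b. \<alpha> b = 0" by auto
  then show ?case by (intro exI[of _ "[]"]) auto
next
  case (insert x F)
  let ?\<alpha> = "\<alpha>(x := 0)"
  have pre: "\<forall>b. b \<notin> F \<longrightarrow> ?\<alpha> b = 0" using insert.prems by simp
  obtain s where s: "set s \<subseteq> F" "\<forall>b. count_list s b = ?\<alpha> b"
    using insert.IH[OF pre] by blast
  have cr: "count_list (replicate n x) b = (if x = b then n else 0)" for n b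
    by (induction n) auto
  show ?case using s
    by (intro exI[of _ "replicate (\<alpha> x) x @ s"]) (auto simp: cr)
qed

lemma pdm_props:
  assumes "\<alpha> \<in> multi_idx q"
  shows "\<exists>s. set s \<subseteq> (Basis :: 'a::euclidean_space set) \<and> length s \<le> q \<and>
     (\<forall>b. count_list s b = \<alpha> b) \<and> (\<forall>v. pdm \<alpha> v = pds s v)"
proof -
  let ?P = "\<lambda>bs. set bs \<subseteq> (Basis :: 'a set) \<and> (\<forall>b. count_list bs b = \<alpha> b)"
  have "\<exists>bs. ?P bs" using exists_list_counts[of "Basis :: 'a set" \<alpha>] assms unfolding multi_idx_def by auto
  then have P: "?P (SOME bs. ?P bs)" by (rule someI_ex)
  let ?s = "SOME bs. ?P bs"
  have "length ?s = (\<Sum>b\<in>Basis. count_list ?s b)" using P sum_count_set[of ?s Basis] by simp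
  also have "\<dots> = (\<Sum>b\<in>Basis. \<alpha> b)" using P by simp
  also have "\<dots> \<le> q" using assms unfolding multi_idx_def by auto
  finally show ?thesis using P unfolding pdm_def by (intro exI[of _ ?s]) auto
qed

lemma mi_fact_ge1: "mi_fact \<alpha> \<ge> 1"
  unfolding mi_fact_def by (intro prod_ge_1) (simp add: fact_ge_1)

lemma finite_multi_idx: "finite (multi_idx q :: ('a::euclidean_space \<Rightarrow> nat) set)"
proof -
  let ?F = "\<lambda>f (b::'a). if b \<in> Basis then f b else 0"
  have "multi_idx q \<subseteq> ?F ` (PiE Basis (\<lambda>_. {..q}))"
  proof
    fix \<alpha> :: "'a \<Rightarrow> nat" assume a: "\<alpha> \<in> multi_idx q"
    have le: "\<alpha> b \<le> q" if "b \<in> Basis" for b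
    proof -
      have "\<alpha> b \<le> (\<Sum>b\<in>Basis. \<alpha> b)" by (rule member_le_sum) (use that in auto)
      then show ?thesis using a unfolding multi_idx_def by auto
    qed
    have "\<alpha> = ?F (restrict \<alpha> Basis)" using a unfolding multi_idx_def by (auto simp: fun_eq_iff)
    moreover have "restrict \<alpha> Basis \<in> PiE Basis (\<lambda>_. {..q})" using le by auto
    ultimately show "\<alpha> \<in> ?F ` (PiE Basis (\<lambda>_. {..q}))" by blast
  qed
  moreover have "finite (PiE (Basis::'a set) (\<lambda>_. {..q}))" by (intro finite_PiE) auto
  ultimately show ?thesis by (meson finite_imageI finite_subset)
qed

lemma SUP_pdm_bounds:
  assumes ne: "\<Omega> \<noteq> {}" and \<alpha>: "\<alpha> \<in> multi_idx q"
    and B: "\<forall>s. set s \<subseteq> Basis \<and> length s \<le> q \<longrightarrow> (\<forall>z\<in>\<Omega>. \<bar>pds s v z\<bar> \<le> B)"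
  shows "0 \<le> (SUP z\<in>\<Omega>. \<bar>pdm \<alpha> v z\<bar>)" "(SUP z\<in>\<Omega>. \<bar>pdm \<alpha> v z\<bar>) \<le> B"
    "\<And>z. z \<in> \<Omega> \<Longrightarrow> \<bar>pdm \<alpha> v z\<bar> \<le> (SUP z\<in>\<Omega>. \<bar>pdm \<alpha> v z\<bar>)"
proof -
  obtain s where s: "set s \<subseteq> Basis" "length s \<le> q" "\<forall>v. pdm \<alpha> v = pds s v"
    using pdm_props[OF \<alpha>] by blast
  have bd: "\<forall>z\<in>\<Omega>. \<bar>pdm \<alpha> v z\<bar> \<le> B" using B s by simp
  have bdd: "bdd_above ((\<lambda>z. \<bar>pdm \<alpha> v z\<bar>) ` \<Omega>)" using bd by (intro bdd_aboveI2) auto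
  show up: "\<And>z. z \<in> \<Omega> \<Longrightarrow> \<bar>pdm \<alpha> v z\<bar> \<le> (SUP z\<in>\<Omega>. \<bar>pdm \<alpha> v z\<bar>)"
    using bdd by (rule cSUP_upper2) auto
  obtain z0 where "z0 \<in> \<Omega>" using ne by auto
  then show "0 \<le> (SUP z\<in>\<Omega>. \<bar>pdm \<alpha> v z\<bar>)" using up[of z0] by linarith
  show "(SUP z\<in>\<Omega>. \<bar>pdm \<alpha> v z\<bar>) \<le> B" using ne bd by (intro cSUP_least) auto
qed

lemma Cq_norm_upper:
  fixes v :: "'a::euclidean_space \<Rightarrow> real"
  assumes ne: "\<Omega> \<noteq> {}"
    and B: "\<forall>s. set s \<subseteq> Basis \<and> length s \<le> q \<longrightarrow> (\<forall>z\<in>\<Omega>. \<bar>pds s v z\<bar> \<le> B)"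
  shows "0 \<le> Cq_norm \<Omega> q v" "Cq_norm \<Omega> q v \<le> real (card (multi_idx q :: ('a \<Rightarrow> nat) set)) * B"
proof -
  have t: "0 \<le> (1 / mi_fact \<alpha>) * (SUP z\<in>\<Omega>. \<bar>pdm \<alpha> v z\<bar>) \<and> (1 / mi_fact \<alpha>) * (SUP z\<in>\<Omega>. \<bar>pdm \<alpha> v z\<bar>) \<le> B"
    if "\<alpha> \<in> multi_idx q" for \<alpha> :: "'a \<Rightarrow> nat"
  proof -
    note sb = SUP_pdm_bounds[OF ne that B]
    have m: "1 \<le> mi_fact \<alpha>" by (rule mi_fact_ge1)
    have "0 < 1 / mi_fact \<alpha>" "1 / mi_fact \<alpha> \<le> 1" using m by auto
    then have "(1 / mi_fact \<alpha>) * (SUP z\<in>\<Omega>. \<bar>pdm \<alpha> v z\<bar>) \<le> 1 * (SUP z\<in>\<Omega>. \<bar>pdm \<alpha> v z\<bar>)"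
      using sb(1) by (intro mult_right_mono) auto
    then show ?thesis using sb(1,2) \<open>0 < 1 / mi_fact \<alpha>\<close> by simp
  qed
  show "0 \<le> Cq_norm \<Omega> q v" unfolding Cq_norm_def using t by (intro sum_nonneg) auto
  show "Cq_norm \<Omega> q v \<le> real (card (multi_idx q :: ('a \<Rightarrow> nat) set)) * B"
    unfolding Cq_norm_def using t by (intro sum_bounded_above) auto
qed

lemma pds_le_Cq_norm:
  assumes S: "open \<Omega>" and b: "bounded \<Omega>" and ne: "\<Omega> \<noteq> {}" and u: "cq_like \<Omega> q u"
    and r: "set r \<subseteq> Basis" "length r \<le> q" and z: "z \<in> \<Omega>"
  shows "\<bar>pds r u z\<bar> \<le> fact q ^ DIM('a) * Cq_norm \<Omega> q (u :: 'a::euclidean_space \<Rightarrow> real)"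
proof -
  obtain M where M: "\<forall>l. set l \<subseteq> Basis \<and> length l \<le> q \<longrightarrow> (\<forall>z\<in>\<Omega>. \<bar>pds l u z\<bar> \<le> M)"
    using cq_like_bound[OF b u] by blast
  let ?\<alpha> = "count_list r"
  have z0: "\<forall>b. b \<notin> Basis \<longrightarrow> count_list r b = 0" using r(1) by (auto simp: count_list_0_iff)
  have "sum (count_list r) Basis = length r" by (rule sum_count_set[OF r(1)]) simp
  then have \<alpha>: "?\<alpha> \<in> multi_idx q" unfolding multi_idx_def using z0 r(2) by simp
  obtain s where s: "set s \<subseteq> Basis" "length s \<le> q" "\<forall>b. count_list s b = ?\<alpha> b" "\<forall>v. pdm ?\<alpha> v = pds s v"
    using pdm_props[OF \<alpha>] by blast
  have "mset s = mset r" using s(3) by (intro multiset_eqI) (simp add: count_mset)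
  then have e: "pds s u z = pds r u z" by (rule pds_perm[OF S u _ r z])
  note Bd = M
  note sb = SUP_pdm_bounds[OF ne \<alpha> Bd]
  note cn = Cq_norm_upper[OF ne Bd]
  let ?T = "\<lambda>\<beta>. (1 / mi_fact \<beta>) * (SUP z\<in>\<Omega>. \<bar>pdm \<beta> u z\<bar>)"
  have tnn: "0 \<le> ?T \<beta>" if "\<beta> \<in> multi_idx q" for \<beta>
    using SUP_pdm_bounds(1)[OF ne that Bd] mi_fact_ge1[of \<beta>] by simp
  have "?T ?\<alpha> \<le> Cq_norm \<Omega> q u" unfolding Cq_norm_def
    by (rule member_le_sum[OF \<alpha> _ finite_multi_idx]) (use tnn in auto)
  then have "mi_fact ?\<alpha> * ?T ?\<alpha> \<le> mi_fact ?\<alpha> * Cq_norm \<Omega> q u"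
    using mi_fact_ge1[of ?\<alpha>] by (intro mult_left_mono) auto
  moreover have "mi_fact ?\<alpha> * ?T ?\<alpha> = (SUP z\<in>\<Omega>. \<bar>pdm ?\<alpha> u z\<bar>)"
    using mi_fact_ge1[of ?\<alpha>] by simp
  ultimately have supb: "(SUP z\<in>\<Omega>. \<bar>pdm ?\<alpha> u z\<bar>) \<le> mi_fact ?\<alpha> * Cq_norm \<Omega> q u"
    by simp
  have mf: "mi_fact ?\<alpha> \<le> fact q ^ DIM('a)"
  proof -
    have "mi_fact ?\<alpha> \<le> (\<Prod>b\<in>(Basis::'a set). fact q)" unfolding mi_fact_def
    proof (intro prod_mono conjI)
      fix b :: 'a assume "b \<in> Basis"
      have "count_list r b \<le> q" using r count_le_length[of r b] by linarith
      then show "(fact (count_list r b) :: real) \<le> fact q" by (rule fact_mono)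
    qed auto
    then show ?thesis by simp
  qed
  have "\<bar>pds r u z\<bar> = \<bar>pdm ?\<alpha> u z\<bar>" using e s(4) by simp
  also have "\<dots> \<le> (SUP z\<in>\<Omega>. \<bar>pdm ?\<alpha> u z\<bar>)" by (rule sb(3)[OF z])
  also have "\<dots> \<le> mi_fact ?\<alpha> * Cq_norm \<Omega> q u" by (rule supb)
  also have "\<dots> \<le> fact q ^ DIM('a) * Cq_norm \<Omega> q u" using mf cn(1) by (rule mult_right_mono)
  finally show ?thesis .
qed

lemma continuous_on_sum_list:
  fixes F :: "'b \<Rightarrow> 'a::topological_space \<Rightarrow> real"
  shows "(\<And>x. x \<in> set xs \<Longrightarrow> continuous_on S (F x)) \<Longrightarrow> continuous_on S (\<lambda>z. \<Sum>x\<leftarrow>xs. F x z)"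
  by (induction xs) (auto intro!: continuous_on_add)

lemma sum_list_abs_bound:
  fixes F :: "'b \<Rightarrow> real"
  shows "(\<And>x. x \<in> set xs \<Longrightarrow> \<bar>F x\<bar> \<le> B) \<Longrightarrow> \<bar>\<Sum>x\<leftarrow>xs. F x\<bar> \<le> real (length xs) * B"
proof (induction xs)
  case Nil then show ?case by simp
next
  case (Cons a xs)
  have "\<bar>\<Sum>x\<leftarrow>a # xs. F x\<bar> \<le> \<bar>F a\<bar> + \<bar>\<Sum>x\<leftarrow>xs. F x\<bar>" by simp
  also have "\<dots> \<le> B + real (length xs) * B" using Cons by (intro add_mono) auto
  finally show ?case by (simp add: algebra_simps)
qed

lemma splits_sub:
  assumes "(l, r) \<in> set (splits bs)"
  shows "set l \<subseteq> set bs" "length l \<le> length bs" "set r \<subseteq> set bs" "length r \<le> length bs"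
proof -
  have m: "mset l + mset r = mset bs" by (rule splits_mset[OF assms])
  then have a: "mset l \<subseteq># mset bs" "mset r \<subseteq># mset bs" by (auto simp flip: m)
  show "set l \<subseteq> set bs" using set_mset_mono[OF a(1)] by simp
  show "set r \<subseteq> set bs" using set_mset_mono[OF a(2)] by simp
  show "length l \<le> length bs" using size_mset_mono[OF a(1)] by simp
  show "length r \<le> length bs" using size_mset_mono[OF a(2)] by simp
qed

lemma leibniz_cq:
  fixes f g :: "'a::euclidean_space \<Rightarrow> real"
  assumes S: "open \<Omega>" and f: "cq_like \<Omega> q f" and g: "cq_like \<Omega> q g"
    and bs: "set bs \<subseteq> Basis" "length bs \<le> q"
  shows "pds_exist \<Omega> bs (\<lambda>z. f z * g z) \<and>
    (\<forall>z\<in>\<Omega>. pds bs (\<lambda>z. f z * g z) z = (\<Sum>(l, r)\<leftarrow>splits bs. pds l f z * pds r g z))"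
proof (rule leibniz[OF S])
  fix l assume a: "mset l \<subseteq># mset bs"
  have "set l \<subseteq> set bs" using set_mset_mono[OF a] by simp
  moreover have "length l \<le> length bs" using size_mset_mono[OF a] by simp
  ultimately have "set l \<subseteq> set bs" "length l \<le> length bs" by auto
  then show "pds_exist \<Omega> l f \<and> pds_exist \<Omega> l g"
    using f g bs unfolding cq_like_def by (meson order_trans)
qed

lemma cq_like_mult:
  fixes f g :: "'a::euclidean_space \<Rightarrow> real"
  assumes S: "open \<Omega>" and f: "cq_like \<Omega> q f" and g: "cq_like \<Omega> q g"
  shows "cq_like \<Omega> q (\<lambda>z. f z * g z)"
    and "\<And>bs z Mf Mg. set bs \<subseteq> Basis \<Longrightarrow> length bs \<le> q \<Longrightarrow> z \<in> \<Omega> \<Longrightarrow>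
       (\<forall>l. set l \<subseteq> Basis \<and> length l \<le> q \<longrightarrow> \<bar>pds l f z\<bar> \<le> Mf) \<Longrightarrow>
       (\<forall>l. set l \<subseteq> Basis \<and> length l \<le> q \<longrightarrow> \<bar>pds l g z\<bar> \<le> Mg) \<Longrightarrow>
       \<bar>pds bs (\<lambda>z. f z * g z) z\<bar> \<le> 2 ^ q * (Mf * Mg)"
proof -
  note L = leibniz_cq[OF S f g]
  obtain Gf where Gf: "\<forall>l. set l \<subseteq> Basis \<and> length l \<le> q \<longrightarrow> continuous_on (closure \<Omega>) (Gf l) \<and> (\<forall>z\<in>\<Omega>. Gf l z = pds l f z)"
    using f unfolding cq_like_def by metis
  obtain Gg where Gg: "\<forall>l. set l \<subseteq> Basis \<and> length l \<le> q \<longrightarrow> continuous_on (closure \<Omega>) (Gg l) \<and> (\<forall>z\<in>\<Omega>. Gg l z = pds l g z)"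
    using g unfolding cq_like_def by metis
  show "cq_like \<Omega> q (\<lambda>z. f z * g z)" unfolding cq_like_def
  proof (intro conjI allI impI)
    show "continuous_on (closure \<Omega>) (\<lambda>z. f z * g z)"
      using f g unfolding cq_like_def by (auto intro: continuous_on_mult)
  next
    fix bs :: "'a list" assume bs: "set bs \<subseteq> Basis \<and> length bs \<le> q"
    show "pds_exist \<Omega> bs (\<lambda>z. f z * g z)" using L bs by blast
  next
    fix bs :: "'a list" assume bs: "set bs \<subseteq> Basis \<and> length bs \<le> q"
    let ?G = "\<lambda>z. \<Sum>(l, r)\<leftarrow>splits bs. Gf l z * Gg r z"
    have sub: "set l \<subseteq> Basis \<and> length l \<le> q" "set r \<subseteq> Basis \<and> length r \<le> q"
      if "(l, r) \<in> set (splits bs)" for l r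
      using splits_sub[OF that] bs by auto
    have "continuous_on (closure \<Omega>) ?G"
      unfolding case_prod_beta
      by (rule continuous_on_sum_list) (use sub Gf Gg in \<open>auto intro!: continuous_on_mult\<close>)
    moreover have "\<forall>z\<in>\<Omega>. ?G z = pds bs (\<lambda>z. f z * g z) z"
    proof
      fix z assume z: "z \<in> \<Omega>"
      have "?G z = (\<Sum>(l, r)\<leftarrow>splits bs. pds l f z * pds r g z)"
        by (rule arg_cong[where f = sum_list], rule map_cong) (use sub Gf Gg z in auto)
      then show "?G z = pds bs (\<lambda>z. f z * g z) z" using L bs z by auto
    qed
    ultimately show "\<exists>G. continuous_on (closure \<Omega>) G \<and> (\<forall>z\<in>\<Omega>. G z = pds bs (\<lambda>z. f z * g z) z)"
      by blast
  qed
next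
  fix bs :: "'a list" and z Mf Mg
  assume bs: "set bs \<subseteq> Basis" "length bs \<le> q" and z: "z \<in> \<Omega>"
    and Mf: "\<forall>l. set l \<subseteq> Basis \<and> length l \<le> q \<longrightarrow> \<bar>pds l f z\<bar> \<le> Mf"
    and Mg: "\<forall>l. set l \<subseteq> Basis \<and> length l \<le> q \<longrightarrow> \<bar>pds l g z\<bar> \<le> Mg"
  have sub: "set l \<subseteq> Basis \<and> length l \<le> q" "set r \<subseteq> Basis \<and> length r \<le> q"
    if "(l, r) \<in> set (splits bs)" for l r
    using splits_sub[OF that] bs by auto
  note L = leibniz_cq[OF S f g]
  have Mf0: "0 \<le> Mf" using Mf[rule_format, of "[]"] by auto
  have "pds bs (\<lambda>z. f z * g z) z = (\<Sum>(l, r)\<leftarrow>splits bs. pds l f z * pds r g z)" using L bs z by blast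
  also have "\<bar>\<dots>\<bar> \<le> real (length (splits bs)) * (Mf * Mg)"
    unfolding case_prod_beta
  proof (rule sum_list_abs_bound)
    fix x assume x: "x \<in> set (splits bs)"
    obtain l r where lr: "x = (l, r)" by force
    have "\<bar>pds l f z * pds r g z\<bar> = \<bar>pds l f z\<bar> * \<bar>pds r g z\<bar>" by (simp add: abs_mult)
    also have "\<dots> \<le> Mf * Mg" using Mf Mg sub[of l r] x lr by (intro mult_mono) auto
    finally show "\<bar>pds (fst x) f z * pds (snd x) g z\<bar> \<le> Mf * Mg" using lr by simp
  qed
  also have "\<dots> \<le> 2 ^ q * (Mf * Mg)"
  proof -
    have Mg0: "0 \<le> Mg" using Mg[rule_format, of "[]"] by auto
    have "real (length (splits bs)) \<le> 2 ^ q" using bs(2) by (simp add: splits_length power_increasing)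
    then show ?thesis using Mf0 Mg0 by (intro mult_right_mono) auto
  qed
  finally show "\<bar>pds bs (\<lambda>z. f z * g z) z\<bar> \<le> 2 ^ q * (Mf * Mg)" .
qed

section \<open>Sections of the kernel\<close>

lemma Basis_prod_0: "b \<in> Basis \<Longrightarrow> (0::'a::euclidean_space, b) \<in> (Basis :: ('a \<times> 'a) set)"
  "b \<in> Basis \<Longrightarrow> (b, 0::'a::euclidean_space) \<in> (Basis :: ('a \<times> 'a) set)"
  unfolding Basis_prod_def by auto

lemma pd_sec2:
  fixes H :: "'a::euclidean_space \<times> 'a \<Rightarrow> real"
  shows "has_pd b (\<lambda>z. H (x, z)) z = has_pd (0, b) H (x, z)" "pd b (\<lambda>z. H (x, z)) z = pd (0, b) H (x, z)"
  unfolding has_pd_def pd_def by simp_all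

lemma pd_sec1:
  fixes H :: "'a::euclidean_space \<times> 'a \<Rightarrow> real"
  shows "has_pd b (\<lambda>z. H (z, y)) z = has_pd (b, 0) H (z, y)" "pd b (\<lambda>z. H (z, y)) z = pd (b, 0) H (z, y)"
  unfolding has_pd_def pd_def by simp_all

lemma sec2_pds:
  fixes k :: "'a::euclidean_space \<times> 'a \<Rightarrow> real"
  assumes S: "open \<Omega>" and x: "x \<in> \<Omega>"
  shows "set l \<subseteq> Basis \<Longrightarrow> pds_exist (\<Omega> \<times> \<Omega>) (map (\<lambda>b. (0, b)) l) k \<Longrightarrow>
    pds_exist \<Omega> l (\<lambda>z. k (x, z)) \<and> (\<forall>z\<in>\<Omega>. pds l (\<lambda>z. k (x, z)) z = pds (map (\<lambda>b. (0, b)) l) k (x, z))"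
proof (induction l)
  case Nil then show ?case by simp
next
  case (Cons b l)
  let ?L = "map (\<lambda>b. (0::'a, b)) l"
  have IH: "pds_exist \<Omega> l (\<lambda>z. k (x, z))" "\<And>z. z \<in> \<Omega> \<Longrightarrow> pds l (\<lambda>z. k (x, z)) z = pds ?L k (x, z)"
    using Cons by auto
  have ex: "\<forall>p\<in>\<Omega> \<times> \<Omega>. has_pd (0, b) (pds ?L k) p" using Cons.prems(2) by simp
  have c: "has_pd b (pds l (\<lambda>z. k (x, z))) z \<and> pd b (pds l (\<lambda>z. k (x, z))) z = pd (0, b) (pds ?L k) (x, z)"
    if z: "z \<in> \<Omega>" for z
  proof -
    have "has_pd b (pds l (\<lambda>z. k (x, z))) z = has_pd b (\<lambda>z. pds ?L k (x, z)) z"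
      "pd b (pds l (\<lambda>z. k (x, z))) z = pd b (\<lambda>z. pds ?L k (x, z)) z"
      using pd_cong[OF S z, of "pds l (\<lambda>z. k (x, z))" "\<lambda>z. pds ?L k (x, z)" b] IH(2) by auto
    then show ?thesis using pd_sec2[of b "pds ?L k" x z] ex x z by auto
  qed
  show ?case using IH c by auto
qed

lemma sec1_pds:
  fixes k :: "'a::euclidean_space \<times> 'a \<Rightarrow> real"
  assumes S: "open \<Omega>" and y: "y \<in> \<Omega>"
  shows "set l \<subseteq> Basis \<Longrightarrow> pds_exist (\<Omega> \<times> \<Omega>) (map (\<lambda>b. (b, 0)) l) k \<Longrightarrow>
    pds_exist \<Omega> l (\<lambda>z. k (z, y)) \<and> (\<forall>z\<in>\<Omega>. pds l (\<lambda>z. k (z, y)) z = pds (map (\<lambda>b. (b, 0)) l) k (z, y))"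
proof (induction l)
  case Nil then show ?case by simp
next
  case (Cons b l)
  let ?L = "map (\<lambda>b. (b, 0::'a)) l"
  have IH: "pds_exist \<Omega> l (\<lambda>z. k (z, y))" "\<And>z. z \<in> \<Omega> \<Longrightarrow> pds l (\<lambda>z. k (z, y)) z = pds ?L k (z, y)"
    using Cons by auto
  have ex: "\<forall>p\<in>\<Omega> \<times> \<Omega>. has_pd (b, 0) (pds ?L k) p" using Cons.prems(2) by simp
  have c: "has_pd b (pds l (\<lambda>z. k (z, y))) z \<and> pd b (pds l (\<lambda>z. k (z, y))) z = pd (b, 0) (pds ?L k) (z, y)"
    if z: "z \<in> \<Omega>" for z
  proof -
    have "has_pd b (pds l (\<lambda>z. k (z, y))) z = has_pd b (\<lambda>z. pds ?L k (z, y)) z"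
      "pd b (pds l (\<lambda>z. k (z, y))) z = pd b (\<lambda>z. pds ?L k (z, y)) z"
      using pd_cong[OF S z, of "pds l (\<lambda>z. k (z, y))" "\<lambda>z. pds ?L k (z, y)" b] IH(2) by auto
    then show ?thesis using pd_sec1[of b "pds ?L k" y z] ex y z by auto
  qed
  show ?case using IH c by auto
qed

lemma sec2_cq:
  fixes k :: "'a::euclidean_space \<times> 'a \<Rightarrow> real"
  assumes S: "open \<Omega>" and x: "x \<in> \<Omega>" and k: "cq_like (\<Omega> \<times> \<Omega>) q k"
    and M: "\<forall>l. set l \<subseteq> Basis \<and> length l \<le> q \<longrightarrow> (\<forall>p\<in>\<Omega> \<times> \<Omega>. \<bar>pds l k p\<bar> \<le> M)"
  shows "cq_like \<Omega> q (\<lambda>z. k (x, z))"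
    "\<And>l z. set l \<subseteq> Basis \<Longrightarrow> length l \<le> q \<Longrightarrow> z \<in> \<Omega> \<Longrightarrow> \<bar>pds l (\<lambda>z. k (x, z)) z\<bar> \<le> M"
proof -
  have mB: "set (map (\<lambda>b. (0::'a, b)) l) \<subseteq> Basis" if "set l \<subseteq> Basis" for l
    using that by (auto simp: Basis_prod_def)
  have P: "pds_exist \<Omega> l (\<lambda>z. k (x, z)) \<and> (\<forall>z\<in>\<Omega>. pds l (\<lambda>z. k (x, z)) z = pds (map (\<lambda>b. (0, b)) l) k (x, z))"
    if "set l \<subseteq> Basis" "length l \<le> q" for l
    by (rule sec2_pds[OF S x that(1)]) (use k mB[OF that(1)] that(2) in \<open>auto simp: cq_like_def\<close>)
  have xc: "(x, z) \<in> closure (\<Omega> \<times> \<Omega>)" if "z \<in> closure \<Omega>" for z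
    using x that closure_subset by (auto simp: closure_Times)
  show "cq_like \<Omega> q (\<lambda>z. k (x, z))" unfolding cq_like_def
  proof (intro conjI allI impI)
    have "continuous_on (closure (\<Omega> \<times> \<Omega>)) k" using k unfolding cq_like_def by auto
    then show "continuous_on (closure \<Omega>) (\<lambda>z. k (x, z))"
      by (rule continuous_on_compose2) (auto intro!: continuous_intros xc)
  next
    fix l :: "'a list" assume l: "set l \<subseteq> Basis \<and> length l \<le> q"
    then show "pds_exist \<Omega> l (\<lambda>z. k (x, z))" using P by blast
  next
    fix l :: "'a list" assume l: "set l \<subseteq> Basis \<and> length l \<le> q"
    obtain G where G: "continuous_on (closure (\<Omega> \<times> \<Omega>)) G" "\<forall>p\<in>\<Omega> \<times> \<Omega>. G p = pds (map (\<lambda>b. (0, b)) l) k p"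
      using k mB l unfolding cq_like_def by (metis length_map)
    have "continuous_on (closure \<Omega>) (\<lambda>z. G (x, z))"
      using G(1) by (rule continuous_on_compose2) (auto intro!: continuous_intros xc)
    moreover have "\<forall>z\<in>\<Omega>. G (x, z) = pds l (\<lambda>z. k (x, z)) z" using G(2) P l x by auto
    ultimately show "\<exists>g. continuous_on (closure \<Omega>) g \<and> (\<forall>z\<in>\<Omega>. g z = pds l (\<lambda>z. k (x, z)) z)" by blast
  qed
  fix l :: "'a list" and z assume l: "set l \<subseteq> Basis" "length l \<le> q" and z: "z \<in> \<Omega>"
  have "pds l (\<lambda>z. k (x, z)) z = pds (map (\<lambda>b. (0, b)) l) k (x, z)" using P[OF l] z by blast
  then show "\<bar>pds l (\<lambda>z. k (x, z)) z\<bar> \<le> M" using M mB[OF l(1)] l(2) x z by auto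
qed

lemma sec1_cq:
  fixes k :: "'a::euclidean_space \<times> 'a \<Rightarrow> real"
  assumes S: "open \<Omega>" and y: "y \<in> \<Omega>" and k: "cq_like (\<Omega> \<times> \<Omega>) q k"
    and M: "\<forall>l. set l \<subseteq> Basis \<and> length l \<le> q \<longrightarrow> (\<forall>p\<in>\<Omega> \<times> \<Omega>. \<bar>pds l k p\<bar> \<le> M)"
  shows "cq_like \<Omega> q (\<lambda>z. k (z, y))"
    "\<And>l z. set l \<subseteq> Basis \<Longrightarrow> length l \<le> q \<Longrightarrow> z \<in> \<Omega> \<Longrightarrow> \<bar>pds l (\<lambda>z. k (z, y)) z\<bar> \<le> M"
proof -
  have mB: "set (map (\<lambda>b. (b, 0::'a)) l) \<subseteq> Basis" if "set l \<subseteq> Basis" for l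
    using that by (auto simp: Basis_prod_def)
  have P: "pds_exist \<Omega> l (\<lambda>z. k (z, y)) \<and> (\<forall>z\<in>\<Omega>. pds l (\<lambda>z. k (z, y)) z = pds (map (\<lambda>b. (b, 0)) l) k (z, y))"
    if "set l \<subseteq> Basis" "length l \<le> q" for l
    by (rule sec1_pds[OF S y that(1)]) (use k mB[OF that(1)] that(2) in \<open>auto simp: cq_like_def\<close>)
  have yc: "(z, y) \<in> closure (\<Omega> \<times> \<Omega>)" if "z \<in> closure \<Omega>" for z
    using y that closure_subset by (auto simp: closure_Times)
  show "cq_like \<Omega> q (\<lambda>z. k (z, y))" unfolding cq_like_def
  proof (intro conjI allI impI)
    have "continuous_on (closure (\<Omega> \<times> \<Omega>)) k" using k unfolding cq_like_def by auto
    then show "continuous_on (closure \<Omega>) (\<lambda>z. k (z, y))"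
      by (rule continuous_on_compose2) (auto intro!: continuous_intros yc)
  next
    fix l :: "'a list" assume l: "set l \<subseteq> Basis \<and> length l \<le> q"
    then show "pds_exist \<Omega> l (\<lambda>z. k (z, y))" using P by blast
  next
    fix l :: "'a list" assume l: "set l \<subseteq> Basis \<and> length l \<le> q"
    obtain G where G: "continuous_on (closure (\<Omega> \<times> \<Omega>)) G" "\<forall>p\<in>\<Omega> \<times> \<Omega>. G p = pds (map (\<lambda>b. (b, 0)) l) k p"
      using k mB l unfolding cq_like_def by (metis length_map)
    have "continuous_on (closure \<Omega>) (\<lambda>z. G (z, y))"
      using G(1) by (rule continuous_on_compose2) (auto intro!: continuous_intros yc)
    moreover have "\<forall>z\<in>\<Omega>. G (z, y) = pds l (\<lambda>z. k (z, y)) z" using G(2) P l y by auto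
    ultimately show "\<exists>g. continuous_on (closure \<Omega>) g \<and> (\<forall>z\<in>\<Omega>. g z = pds l (\<lambda>z. k (z, y)) z)" by blast
  qed
  fix l :: "'a list" and z assume l: "set l \<subseteq> Basis" "length l \<le> q" and z: "z \<in> \<Omega>"
  have "pds l (\<lambda>z. k (z, y)) z = pds (map (\<lambda>b. (b, 0)) l) k (z, y)" using P[OF l] z by blast
  then show "\<bar>pds l (\<lambda>z. k (z, y)) z\<bar> \<le> M" using M mB[OF l(1)] l(2) y z by auto
qed

lemma integrable_cl:
  fixes F :: "'a::euclidean_space \<Rightarrow> real"
  assumes b: "bounded \<Omega>" and o: "open \<Omega>" and c: "continuous_on (closure \<Omega>) F"
  shows "F integrable_on \<Omega>"
proof -
  have lm: "\<Omega> \<in> lmeasurable" by (rule lmeasurable_open[OF b o])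
  then have sl: "\<Omega> \<in> sets lebesgue" by (rule fmeasurableD)
  have c2: "continuous_on \<Omega> F" using c closure_subset continuous_on_subset by blast
  have m: "F \<in> borel_measurable (lebesgue_on \<Omega>)" by (rule continuous_imp_measurable_on_sets_lebesgue[OF c2 sl])
  have "compact (F ` closure \<Omega>)" using c b by (intro compact_continuous_image compact_closure[THEN iffD2])
  then obtain B where B: "\<forall>y\<in>F ` closure \<Omega>. norm y \<le> B" using compact_imp_bounded bounded_iff by metis
  show ?thesis
  proof (rule measurable_bounded_by_integrable_imp_integrable_real[OF m _ _ sl])
    show "(\<lambda>x. B) integrable_on \<Omega>" by (rule integrable_on_const[OF lm])
    show "\<And>x. x \<in> \<Omega> \<Longrightarrow> \<bar>F x\<bar> \<le> B" using B closure_subset by fastforce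
  qed
qed

lemma integral_abs_le:
  fixes F :: "'a::euclidean_space \<Rightarrow> real"
  assumes b: "bounded \<Omega>" and o: "open \<Omega>" and i: "F integrable_on \<Omega>" and le: "\<And>x. x \<in> \<Omega> \<Longrightarrow> \<bar>F x\<bar> \<le> c"
  shows "\<bar>integral \<Omega> F\<bar> \<le> c * measure lebesgue \<Omega>"
proof -
  have lm: "\<Omega> \<in> lmeasurable" by (rule lmeasurable_open[OF b o])
  have "norm (integral \<Omega> F) \<le> integral \<Omega> (\<lambda>x. c)"
    by (rule integral_norm_bound_integral[OF i integrable_on_const[OF lm]]) (use le in auto)
  also have "integral \<Omega> (\<lambda>x. c) = c * measure lebesgue \<Omega>"
    using lmeasure_integral[OF lm] integral_mult[OF integrable_on_const[OF lm], of c 1] by simp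
  finally show ?thesis by simp
qed

lemma bound_closure:
  fixes F :: "'a::euclidean_space \<Rightarrow> real"
  assumes c: "continuous_on (closure \<Omega>) F" and le: "\<And>x. x \<in> \<Omega> \<Longrightarrow> \<bar>F x\<bar> \<le> C"
    and x: "x \<in> closure \<Omega>"
  shows "\<bar>F x\<bar> \<le> C"
proof -
  have cl: "closed {y::real. \<bar>y\<bar> \<le> C}"
    by (rule closed_Collect_le) (auto intro: continuous_intros)
  have "closed (closure \<Omega> \<inter> F -` {y. \<bar>y\<bar> \<le> C})"
    by (rule continuous_closed_preimage[OF c closed_closure cl])
  moreover have "\<Omega> \<subseteq> closure \<Omega> \<inter> F -` {y. \<bar>y\<bar> \<le> C}" using le closure_subset by auto
  ultimately have "closure \<Omega> \<subseteq> closure \<Omega> \<inter> F -` {y. \<bar>y\<bar> \<le> C}" by (meson closure_minimal)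
  then show ?thesis using x by auto
qed

lemma integral_param_cont:
  fixes F :: "'p::metric_space \<times> 'a::euclidean_space \<Rightarrow> real"
  assumes T: "compact T" and b: "bounded \<Omega>" and o: "open \<Omega>"
    and c: "continuous_on (T \<times> closure \<Omega>) F"
  shows "continuous_on T (\<lambda>p. integral \<Omega> (\<lambda>z. F (p, z)))"
proof -
  let ?\<mu> = "measure lebesgue \<Omega>"
  have \<mu>0: "?\<mu> \<ge> 0" by simp
  have uc: "uniformly_continuous_on (T \<times> closure \<Omega>) F"
    by (rule compact_uniformly_continuous[OF c]) (use T b in \<open>auto intro!: compact_Times simp: compact_closure\<close>)
  have int: "(\<lambda>z. F (p, z)) integrable_on \<Omega>" if p: "p \<in> T" for p
  proof (rule integrable_cl[OF b o])
    show "continuous_on (closure \<Omega>) (\<lambda>z. F (p, z))"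
      using c by (rule continuous_on_compose2) (auto intro!: continuous_intros simp: p)
  qed
  show ?thesis unfolding continuous_on_iff
  proof (intro ballI allI impI)
    fix p e assume p: "p \<in> T" and e: "(0::real) < e"
    define e' where "e' = e / (?\<mu> + 1)"
    have mp: "?\<mu> + 1 > 0" using \<mu>0 by linarith
    then have e': "e' > 0" unfolding e'_def using e by (intro divide_pos_pos)
    obtain d where d: "d > 0" "\<forall>a\<in>T \<times> closure \<Omega>. \<forall>a'\<in>T \<times> closure \<Omega>. dist a' a < d \<longrightarrow> dist (F a') (F a) < e'"
      using uc e' unfolding uniformly_continuous_on_def by metis
    show "\<exists>d>0. \<forall>p'\<in>T. dist p' p < d \<longrightarrow> dist (integral \<Omega> (\<lambda>z. F (p', z))) (integral \<Omega> (\<lambda>z. F (p, z))) < e"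
    proof (intro exI[of _ d] conjI ballI impI)
      show "d > 0" by (rule d(1))
      fix p' assume p': "p' \<in> T" and dp: "dist p' p < d"
      have pt: "\<bar>F (p', z) - F (p, z)\<bar> \<le> e'" if z: "z \<in> \<Omega>" for z
      proof -
        have zc: "z \<in> closure \<Omega>" using z closure_subset by auto
        have "dist (p', z) (p, z) < d" using dp by (simp add: dist_Pair_Pair)
        then have "dist (F (p', z)) (F (p, z)) < e'" using d(2) p p' zc by auto
        then show ?thesis by (simp add: dist_real_def)
      qed
      have "integral \<Omega> (\<lambda>z. F (p', z)) - integral \<Omega> (\<lambda>z. F (p, z)) = integral \<Omega> (\<lambda>z. F (p', z) - F (p, z))"
        using integral_diff[OF int[OF p'] int[OF p]] by simp
      moreover have "\<bar>integral \<Omega> (\<lambda>z. F (p', z) - F (p, z))\<bar> \<le> e' * ?\<mu>"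
        by (rule integral_abs_le[OF b o integrable_diff[OF int[OF p'] int[OF p]] pt])
      moreover have "e' * ?\<mu> < e"
      proof -
        have "e' * ?\<mu> < e' * (?\<mu> + 1)" using e' by simp
        also have "\<dots> = e" unfolding e'_def using mp by simp
        finally show ?thesis .
      qed
      ultimately show "dist (integral \<Omega> (\<lambda>z. F (p', z))) (integral \<Omega> (\<lambda>z. F (p, z))) < e"
        by (simp add: dist_real_def)
    qed
  qed
qed

section \<open>Linear algebra\<close>

lemma inj_imp_inverse:
  fixes A :: "nat \<Rightarrow> nat \<Rightarrow> real"
  assumes inj: "\<And>v. (\<forall>i<n. (\<Sum>j<n. A i j * v j) = 0) \<Longrightarrow> (\<forall>i<n. v i = 0)"
  shows "\<exists>B. is_inverse n A B"
proof -
  define M where "M = mat n n (\<lambda>(i, j). A i j)"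
  have M: "M \<in> carrier_mat n n" unfolding M_def by simp
  have mv: "vec_index (M *\<^sub>v v) i = (\<Sum>j<n. A i j * vec_index v j)" if "i < n" "v \<in> carrier_vec n" for v i
    using that unfolding M_def by (simp add: scalar_prod_def atLeast0LessThan)
  have "Determinant.det M \<noteq> 0"
  proof
    assume "Determinant.det M = 0"
    then obtain v where v: "v \<in> carrier_vec n" "v \<noteq> 0\<^sub>v n" "M *\<^sub>v v = 0\<^sub>v n"
      using det_0_iff_vec_prod_zero_field[OF M] by blast
    have "\<forall>i<n. (\<Sum>j<n. A i j * vec_index v j) = 0"
    proof (intro allI impI)
      fix i assume i: "i < n"
      have "vec_index (M *\<^sub>v v) i = 0" using v(3) i by simp
      then show "(\<Sum>j<n. A i j * vec_index v j) = 0" using mv[OF i v(1)] by simp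
    qed
    then have "\<forall>i<n. vec_index v i = 0" by (rule inj)
    then have "v = 0\<^sub>v n" using v(1) by (intro eq_vecI) auto
    then show False using v(2) by simp
  qed
  then have "M \<in> Units (ring_mat TYPE(real) n ())" by (rule det_non_zero_imp_unit[OF M])
  then obtain B where B: "B \<in> carrier_mat n n" "M * B = 1\<^sub>m n" "B * M = 1\<^sub>m n"
    unfolding Units_def by (auto simp: ring_mat_simps)
  have AB: "mat_mult n A (\<lambda>i j. B $$ (i, j)) i j = (if i = j then 1 else 0)" if "i < n" "j < n" for i j
  proof -
    have "(M * B) $$ (i, j) = (\<Sum>l<n. A i l * B $$ (l, j))"
      using that B(1) unfolding M_def by (simp add: scalar_prod_def atLeast0LessThan)
    then show ?thesis using B(2) that unfolding mat_mult_def by simp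
  qed
  have BA: "mat_mult n (\<lambda>i j. B $$ (i, j)) A i j = (if i = j then 1 else 0)" if "i < n" "j < n" for i j
  proof -
    have "(B * M) $$ (i, j) = (\<Sum>l<n. B $$ (i, l) * A l j)"
      using that B(1) unfolding M_def by (simp add: scalar_prod_def atLeast0LessThan)
    then show ?thesis using B(3) that unfolding mat_mult_def by simp
  qed
  show ?thesis unfolding is_inverse_def using AB BA by blast
qed

lemma sup_norm_ge:
  fixes \<phi> :: "'a::euclidean_space \<Rightarrow> real"
  assumes b: "bounded \<Omega>" and c: "continuous_on (closure \<Omega>) \<phi>" and x: "x \<in> closure \<Omega>"
  shows "\<bar>\<phi> x\<bar> \<le> sup_norm \<Omega> \<phi>"
proof -
  have "compact (\<phi> ` closure \<Omega>)" using c b by (intro compact_continuous_image compact_closure[THEN iffD2])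
  then obtain B where B: "\<forall>y\<in>\<phi> ` closure \<Omega>. norm y \<le> B" using compact_imp_bounded bounded_iff by metis
  have "bdd_above ((\<lambda>x. \<bar>\<phi> x\<bar>) ` closure \<Omega>)" using B by (intro bdd_aboveI2[of _ _ B]) auto
  then show ?thesis unfolding sup_norm_def using x by (rule cSUP_upper2) auto
qed

lemma sup_norm_le:
  fixes \<phi> :: "'a::euclidean_space \<Rightarrow> real"
  assumes ne: "\<Omega> \<noteq> {}" and le: "\<And>x. x \<in> closure \<Omega> \<Longrightarrow> \<bar>\<phi> x\<bar> \<le> B"
  shows "sup_norm \<Omega> \<phi> \<le> B"
  unfolding sup_norm_def using ne closure_subset le by (intro cSUP_least) auto

lemma k_cont1:
  fixes k :: "'a::euclidean_space \<times> 'a \<Rightarrow> real"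
  assumes kc: "continuous_on (closure \<Omega> \<times> closure \<Omega>) k" and y: "y \<in> closure \<Omega>"
  shows "continuous_on (closure \<Omega>) (\<lambda>x. k (x, y))"
  using kc by (rule continuous_on_compose2) (auto intro!: continuous_intros simp: y)

lemma k_cont2:
  fixes k :: "'a::euclidean_space \<times> 'a \<Rightarrow> real"
  assumes kc: "continuous_on (closure \<Omega> \<times> closure \<Omega>) k" and x: "x \<in> closure \<Omega>"
  shows "continuous_on (closure \<Omega>) (\<lambda>y. k (x, y))"
  using kc by (rule continuous_on_compose2) (auto intro!: continuous_intros simp: x)

lemma stab:
  fixes k :: "'a::euclidean_space \<times> 'a \<Rightarrow> real" and yy :: "nat \<Rightarrow> 'a"
  assumes S: "open \<Omega>" and bd: "bounded \<Omega>" and ne: "\<Omega> \<noteq> {}"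
    and kc: "continuous_on (closure \<Omega> \<times> closure \<Omega>) k"
    and Mb: "\<forall>x\<in>closure \<Omega>. \<forall>y\<in>closure \<Omega>. \<bar>k (x, y)\<bar> \<le> M"
    and yin: "\<forall>i<n. yy i \<in> closure \<Omega>"
    and CQ: "(\<Sum>i<n. \<bar>ww i\<bar>) \<le> CQ"
    and E: "\<forall>x\<in>closure \<Omega>. \<forall>y\<in>closure \<Omega>.
       \<bar>integral \<Omega> (\<lambda>z. k (x, z) * k (z, y)) - (\<Sum>i<n. ww i * (k (x, yy i) * k (yy i, y)))\<bar> \<le> e"
    and Cs: "\<forall>v. continuous_on (closure \<Omega>) v \<longrightarrow> sup_norm \<Omega> v \<le> Cs * sup_norm \<Omega> (\<lambda>x. lam * v x - Kop \<Omega> k v x)"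
    and Cs0: "Cs \<ge> 0" and lam: "lam \<noteq> 0" and small: "Cs * CQ * e \<le> \<bar>lam\<bar> / 2"
    and sol: "\<forall>i<n. lam * v i - (\<Sum>j<n. ww j * k (yy i, yy j) * v j) = g i"
    and G: "\<forall>i<n. \<bar>g i\<bar> \<le> G"
  shows "\<forall>i<n. \<bar>v i\<bar> \<le> 2 * (1 + Cs * M * CQ) / \<bar>lam\<bar> * G"
proof (cases "n = 0")
  case True then show ?thesis by simp
next
  case False
  define V where "V = Max ((\<lambda>i. \<bar>v i\<bar>) ` {..<n})"
  have Vi: "\<bar>v i\<bar> \<le> V" if "i < n" for i unfolding V_def using that by (intro Max_ge) auto
  have V0: "0 \<le> V" using Vi[of 0] False by auto
  obtain i0 where i0: "i0 < n" "V = \<bar>v i0\<bar>"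
  proof -
    have "V \<in> (\<lambda>i. \<bar>v i\<bar>) ` {..<n}" unfolding V_def using False by (intro Max_in) auto
    then show ?thesis using that by auto
  qed
  obtain z0 where z0: "z0 \<in> \<Omega>" using ne by blast
  have z0c: "z0 \<in> closure \<Omega>" using z0 closure_subset by blast
  have "\<bar>k (z0, z0)\<bar> \<le> M" using Mb z0c by blast
  then have M0: "0 \<le> M" by linarith
  have "0 \<le> (\<Sum>i<n. \<bar>ww i\<bar>)" by (rule sum_nonneg) simp
  then have CQ0: "0 \<le> CQ" using CQ by linarith
  have "\<bar>integral \<Omega> (\<lambda>z. k (z0, z) * k (z, z0)) - (\<Sum>i<n. ww i * (k (z0, yy i) * k (yy i, z0)))\<bar> \<le> e"
    using E z0c by blast
  then have e0: "0 \<le> e" by linarith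
  have "\<bar>g 0\<bar> \<le> G" using G False by blast
  then have G0: "0 \<le> G" by linarith
  define \<phi> where "\<phi> = (\<lambda>x. \<Sum>j<n. ww j * k (x, yy j) * v j)"
  have \<phi>c: "continuous_on (closure \<Omega>) \<phi>" unfolding \<phi>_def
    using yin by (intro continuous_intros continuous_on_mult_left continuous_on_mult_right k_cont1[OF kc]) auto
  have int: "(\<lambda>z. k (x, z) * k (z, yy j)) integrable_on \<Omega>" if "x \<in> closure \<Omega>" "j < n" for x j
    by (rule integrable_cl[OF bd S]) (intro continuous_on_mult k_cont1[OF kc] k_cont2[OF kc], use that yin in auto)
  have K\<phi>: "Kop \<Omega> k \<phi> x = (\<Sum>j<n. ww j * v j * integral \<Omega> (\<lambda>z. k (x, z) * k (z, yy j)))"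
    if x: "x \<in> closure \<Omega>" for x
  proof -
    have "Kop \<Omega> k \<phi> x = integral \<Omega> (\<lambda>z. \<Sum>j<n. ww j * v j * (k (x, z) * k (z, yy j)))"
      unfolding Kop_def \<phi>_def by (simp add: sum_distrib_left mult_ac)
    also have "\<dots> = (\<Sum>j<n. integral \<Omega> (\<lambda>z. ww j * v j * (k (x, z) * k (z, yy j))))"
    proof (rule integral_sum)
      fix j assume j: "j \<in> {..<n}"
      have ij: "(\<lambda>z. k (x, z) * k (z, yy j)) integrable_on \<Omega>" using int x j by simp
      show "(\<lambda>z. ww j * v j * (k (x, z) * k (z, yy j))) integrable_on \<Omega>"
        using integrable_on_cmult_left[OF ij, of "ww j * v j"] by simp
    qed simp
    also have "\<dots> = (\<Sum>j<n. ww j * v j * integral \<Omega> (\<lambda>z. k (x, z) * k (z, yy j)))"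
      by simp
    finally show ?thesis .
  qed
  define Eh where "Eh = (\<lambda>x y. integral \<Omega> (\<lambda>z. k (x, z) * k (z, y)) - (\<Sum>i<n. ww i * (k (x, yy i) * k (yy i, y))))"
  have res: "lam * \<phi> x - Kop \<Omega> k \<phi> x = (\<Sum>j<n. ww j * k (x, yy j) * g j) - (\<Sum>j<n. ww j * v j * Eh x (yy j))"
    if x: "x \<in> closure \<Omega>" for x
  proof -
    have lv: "lam * v j = g j + (\<Sum>i<n. ww i * k (yy j, yy i) * v i)" if "j < n" for j
    proof -
      have "lam * v j - (\<Sum>i<n. ww i * k (yy j, yy i) * v i) = g j" using sol that by blast
      then show ?thesis by linarith
    qed
    have "lam * \<phi> x = (\<Sum>j<n. ww j * k (x, yy j) * (lam * v j))"
      unfolding \<phi>_def by (simp add: sum_distrib_left mult_ac)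
    also have "\<dots> = (\<Sum>j<n. ww j * k (x, yy j) * (g j + (\<Sum>i<n. ww i * k (yy j, yy i) * v i)))"
      using lv by (intro sum.cong) auto
    also have "\<dots> = (\<Sum>j<n. ww j * k (x, yy j) * g j) + (\<Sum>j<n. \<Sum>i<n. ww j * k (x, yy j) * (ww i * k (yy j, yy i) * v i))"
      by (simp only: distrib_left sum.distrib sum_distrib_left)
    also have "(\<Sum>j<n. \<Sum>i<n. ww j * k (x, yy j) * (ww i * k (yy j, yy i) * v i))
        = (\<Sum>i<n. \<Sum>j<n. ww j * k (x, yy j) * (ww i * k (yy j, yy i) * v i))"
      by (rule sum.swap)
    also have "\<dots> = (\<Sum>i<n. ww i * v i * (\<Sum>j<n. ww j * (k (x, yy j) * k (yy j, yy i))))"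
      by (intro sum.cong refl) (simp add: sum_distrib_left mult_ac)
    finally have l: "lam * \<phi> x = (\<Sum>j<n. ww j * k (x, yy j) * g j) + (\<Sum>i<n. ww i * v i * (\<Sum>j<n. ww j * (k (x, yy j) * k (yy j, yy i))))" .
    have d: "(\<Sum>i<n. ww i * v i * Eh x (yy i)) = Kop \<Omega> k \<phi> x - (\<Sum>i<n. ww i * v i * (\<Sum>j<n. ww j * (k (x, yy j) * k (yy j, yy i))))"
      unfolding K\<phi>[OF x] Eh_def by (simp only: right_diff_distrib sum_subtractf)
    show ?thesis using l d by linarith
  qed
  have resb: "\<bar>lam * \<phi> x - Kop \<Omega> k \<phi> x\<bar> \<le> M * CQ * G + CQ * V * e" if x: "x \<in> closure \<Omega>" for x
  proof -
    have a: "\<bar>\<Sum>j<n. ww j * k (x, yy j) * g j\<bar> \<le> M * CQ * G"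
    proof -
      have "\<bar>\<Sum>j<n. ww j * k (x, yy j) * g j\<bar> \<le> (\<Sum>j<n. \<bar>ww j\<bar> * (M * G))"
      proof (rule order_trans[OF sum_abs], rule sum_mono)
        fix j assume j: "j \<in> {..<n}"
        have k1: "\<bar>k (x, yy j)\<bar> \<le> M" using Mb x yin j by blast
        have g1: "\<bar>g j\<bar> \<le> G" using G j by blast
        have "\<bar>k (x, yy j)\<bar> * \<bar>g j\<bar> \<le> M * G" using k1 g1 M0 by (intro mult_mono) auto
        then have "\<bar>ww j\<bar> * (\<bar>k (x, yy j)\<bar> * \<bar>g j\<bar>) \<le> \<bar>ww j\<bar> * (M * G)" by (intro mult_left_mono) auto
        then show "\<bar>ww j * k (x, yy j) * g j\<bar> \<le> \<bar>ww j\<bar> * (M * G)" by (simp add: abs_mult mult.assoc)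
      qed
      also have "\<dots> = (\<Sum>j<n. \<bar>ww j\<bar>) * (M * G)" by (simp add: sum_distrib_right)
      also have "\<dots> \<le> CQ * (M * G)" using CQ M0 G0 by (intro mult_right_mono) auto
      finally show ?thesis by (simp add: mult_ac)
    qed
    have b: "\<bar>\<Sum>j<n. ww j * v j * Eh x (yy j)\<bar> \<le> CQ * V * e"
    proof -
      have "\<bar>\<Sum>j<n. ww j * v j * Eh x (yy j)\<bar> \<le> (\<Sum>j<n. \<bar>ww j\<bar> * (V * e))"
      proof (rule order_trans[OF sum_abs], rule sum_mono)
        fix j assume j: "j \<in> {..<n}"
        have k1: "\<bar>Eh x (yy j)\<bar> \<le> e" using E x yin j unfolding Eh_def by blast
        have g1: "\<bar>v j\<bar> \<le> V" using Vi j by blast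
        have "\<bar>v j\<bar> * \<bar>Eh x (yy j)\<bar> \<le> V * e" using k1 g1 V0 by (intro mult_mono) auto
        then have "\<bar>ww j\<bar> * (\<bar>v j\<bar> * \<bar>Eh x (yy j)\<bar>) \<le> \<bar>ww j\<bar> * (V * e)" by (intro mult_left_mono) auto
        then show "\<bar>ww j * v j * Eh x (yy j)\<bar> \<le> \<bar>ww j\<bar> * (V * e)" by (simp add: abs_mult mult.assoc)
      qed
      also have "\<dots> = (\<Sum>j<n. \<bar>ww j\<bar>) * (V * e)" by (simp add: sum_distrib_right)
      also have "\<dots> \<le> CQ * (V * e)" using CQ V0 e0 by (intro mult_right_mono) auto
      finally show ?thesis by (simp add: mult_ac)
    qed
    have "\<bar>lam * \<phi> x - Kop \<Omega> k \<phi> x\<bar> \<le> \<bar>\<Sum>j<n. ww j * k (x, yy j) * g j\<bar> + \<bar>\<Sum>j<n. ww j * v j * Eh x (yy j)\<bar>"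
      unfolding res[OF x] by (rule abs_triangle_ineq4)
    then show ?thesis using a b by linarith
  qed
  have sn: "sup_norm \<Omega> \<phi> \<le> Cs * (M * CQ * G + CQ * V * e)"
  proof -
    have "sup_norm \<Omega> \<phi> \<le> Cs * sup_norm \<Omega> (\<lambda>x. lam * \<phi> x - Kop \<Omega> k \<phi> x)" using Cs \<phi>c by blast
    also have "\<dots> \<le> Cs * (M * CQ * G + CQ * V * e)"
      using sup_norm_le[OF ne resb] Cs0 by (intro mult_left_mono) auto
    finally show ?thesis .
  qed
  have vb: "\<bar>lam\<bar> * \<bar>v i\<bar> \<le> G + Cs * (M * CQ * G + CQ * V * e)" if i: "i < n" for i
  proof -
    have p: "\<phi> (yy i) = (\<Sum>j<n. ww j * k (yy i, yy j) * v j)" unfolding \<phi>_def by simp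
    have "lam * v i - (\<Sum>j<n. ww j * k (yy i, yy j) * v j) = g i" using sol i by blast
    then have "lam * v i = g i + \<phi> (yy i)" using p by linarith
    then have "\<bar>lam\<bar> * \<bar>v i\<bar> \<le> \<bar>g i\<bar> + \<bar>\<phi> (yy i)\<bar>" by (metis abs_mult abs_triangle_ineq)
    also have "\<dots> \<le> G + sup_norm \<Omega> \<phi>"
    proof (rule add_mono)
      show "\<bar>g i\<bar> \<le> G" using G i by blast
      show "\<bar>\<phi> (yy i)\<bar> \<le> sup_norm \<Omega> \<phi>" by (rule sup_norm_ge[OF bd \<phi>c]) (use yin i in blast)
    qed
    finally show ?thesis using sn by linarith
  qed
  have eqa: "Cs * (M * CQ * G + CQ * V * e) = Cs * M * CQ * G + (Cs * CQ * e) * V"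
    by (simp add: algebra_simps)
  have "(Cs * CQ * e) * V \<le> (\<bar>lam\<bar> / 2) * V" using small V0 by (rule mult_right_mono)
  moreover have "\<bar>lam\<bar> * V \<le> G + Cs * (M * CQ * G + CQ * V * e)"
    using vb[OF i0(1)] by (simp only: i0(2)[symmetric])
  ultimately have "\<bar>lam\<bar> * V \<le> G + Cs * M * CQ * G + (\<bar>lam\<bar> / 2) * V"
    using eqa by linarith
  moreover have "(1 + Cs * M * CQ) * G = G + Cs * M * CQ * G" by (simp add: algebra_simps)
  ultimately have R: "\<bar>lam\<bar> / 2 * V \<le> (1 + Cs * M * CQ) * G" by linarith
  have lp: "0 < \<bar>lam\<bar>" using lam by simp
  have "V = (2 / \<bar>lam\<bar>) * (\<bar>lam\<bar> / 2 * V)" using lp by simp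
  also have "\<dots> \<le> (2 / \<bar>lam\<bar>) * ((1 + Cs * M * CQ) * G)" using R lp by (intro mult_left_mono) auto
  also have "\<dots> = 2 * (1 + Cs * M * CQ) / \<bar>lam\<bar> * G" by simp
  finally have "V \<le> 2 * (1 + Cs * M * CQ) / \<bar>lam\<bar> * G" .
  then show ?thesis using Vi by (meson order_trans)
qed

lemma quad_err_kk:
  fixes k :: "'a::euclidean_space \<times> 'a \<Rightarrow> real"
  assumes S: "open \<Omega>" and bd: "bounded \<Omega>" and ne: "\<Omega> \<noteq> {}"
    and k: "cq_like (\<Omega> \<times> \<Omega>) q k"
    and Mk: "\<forall>l. set l \<subseteq> Basis \<and> length l \<le> q \<longrightarrow> (\<forall>p\<in>\<Omega> \<times> \<Omega>. \<bar>pds l k p\<bar> \<le> Mk)"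
    and Cw: "\<And>v. Cq \<Omega> q v \<Longrightarrow> \<bar>integral \<Omega> v - (\<Sum>i<n. ww i * v (yy i))\<bar> \<le> Cw * hq * Cq_norm \<Omega> q v"
    and hq: "hq \<ge> 0"
    and yin: "\<forall>i<n. yy i \<in> closure \<Omega>"
  shows "\<forall>x\<in>closure \<Omega>. \<forall>y\<in>closure \<Omega>.
    \<bar>integral \<Omega> (\<lambda>z. k (x, z) * k (z, y)) - (\<Sum>i<n. ww i * (k (x, yy i) * k (yy i, y)))\<bar>
      \<le> max Cw 0 * (real (card (multi_idx q :: ('a \<Rightarrow> nat) set)) * (2 ^ q * (Mk * Mk))) * hq"
proof -
  let ?B = "max Cw 0 * (real (card (multi_idx q :: ('a \<Rightarrow> nat) set)) * (2 ^ q * (Mk * Mk))) * hq"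
  have kc: "continuous_on (closure \<Omega> \<times> closure \<Omega>) k" using k unfolding cq_like_def by (simp add: closure_Times)
  have inner: "\<bar>integral \<Omega> (\<lambda>z. k (x, z) * k (z, y)) - (\<Sum>i<n. ww i * (k (x, yy i) * k (yy i, y)))\<bar> \<le> ?B"
    if x: "x \<in> \<Omega>" and y: "y \<in> \<Omega>" for x y
  proof -
    note kx = sec2_cq[OF S x k Mk] and ky = sec1_cq[OF S y k Mk]
    let ?v = "\<lambda>z. k (x, z) * k (z, y)"
    have cv: "cq_like \<Omega> q ?v" by (rule cq_like_mult(1)[OF S kx(1) ky(1)])
    have bv: "\<forall>s. set s \<subseteq> Basis \<and> length s \<le> q \<longrightarrow> (\<forall>z\<in>\<Omega>. \<bar>pds s ?v z\<bar> \<le> 2 ^ q * (Mk * Mk))"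
    proof (intro allI impI ballI)
      fix s :: "'a list" and z assume s: "set s \<subseteq> Basis \<and> length s \<le> q" and z: "z \<in> \<Omega>"
      show "\<bar>pds s ?v z\<bar> \<le> 2 ^ q * (Mk * Mk)"
        by (rule cq_like_mult(2)[OF S kx(1) ky(1)]) (use s z kx(2) ky(2) in auto)
    qed
    note cn = Cq_norm_upper[OF ne bv]
    have "\<bar>integral \<Omega> ?v - (\<Sum>i<n. ww i * ?v (yy i))\<bar> \<le> Cw * hq * Cq_norm \<Omega> q ?v"
      using Cw cv by (simp add: Cq_cq_like)
    also have "\<dots> \<le> max Cw 0 * hq * Cq_norm \<Omega> q ?v"
      using cn(1) hq by (intro mult_right_mono) auto
    also have "\<dots> \<le> max Cw 0 * hq * (real (card (multi_idx q :: ('a \<Rightarrow> nat) set)) * (2 ^ q * (Mk * Mk)))"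
      using cn(2) hq by (intro mult_left_mono) auto
    finally show ?thesis by (simp add: mult_ac)
  qed
  define P where "P = (\<lambda>p::'a \<times> 'a. integral \<Omega> (\<lambda>z. k (fst p, z) * k (z, snd p)) - (\<Sum>i<n. ww i * (k (fst p, yy i) * k (yy i, snd p))))"
  have Pc: "continuous_on (closure (\<Omega> \<times> \<Omega>)) P"
  proof -
    have T: "compact (closure \<Omega> \<times> closure \<Omega>)" using bd by (intro compact_Times) (auto simp: compact_closure)
    have c1: "continuous_on ((closure \<Omega> \<times> closure \<Omega>) \<times> closure \<Omega>) (\<lambda>pz. k (fst (fst pz), snd pz) * k (snd pz, snd (fst pz)))"
      by (intro continuous_on_mult continuous_on_compose2[OF kc]) (auto intro!: continuous_intros)
    have "continuous_on (closure \<Omega> \<times> closure \<Omega>) (\<lambda>p. integral \<Omega> (\<lambda>z. (\<lambda>pz. k (fst (fst pz), snd pz) * k (snd pz, snd (fst pz))) (p, z)))"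
      by (rule integral_param_cont[OF T bd S c1])
    moreover have "continuous_on (closure \<Omega> \<times> closure \<Omega>) (\<lambda>p. \<Sum>i<n. ww i * (k (fst p, yy i) * k (yy i, snd p)))"
      using yin by (intro continuous_intros continuous_on_compose2[OF kc]) (auto intro!: continuous_intros)
    ultimately show ?thesis unfolding P_def closure_Times by (intro continuous_on_diff) auto
  qed
  show ?thesis
  proof (intro ballI)
    fix x y assume x: "x \<in> closure \<Omega>" and y: "y \<in> closure \<Omega>"
    have "\<bar>P (x, y)\<bar> \<le> ?B"
    proof (rule bound_closure[OF Pc])
      show "\<And>p. p \<in> \<Omega> \<times> \<Omega> \<Longrightarrow> \<bar>P p\<bar> \<le> ?B" unfolding P_def using inner by auto
      show "(x, y) \<in> closure (\<Omega> \<times> \<Omega>)" using x y by (simp add: closure_Times)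
    qed
    then show "\<bar>integral \<Omega> (\<lambda>z. k (x, z) * k (z, y)) - (\<Sum>i<n. ww i * (k (x, yy i) * k (yy i, y)))\<bar> \<le> ?B"
      unfolding P_def by simp
  qed
qed

lemma quad_err_ku:
  fixes k :: "'a::euclidean_space \<times> 'a \<Rightarrow> real"
  assumes S: "open \<Omega>" and bd: "bounded \<Omega>" and ne: "\<Omega> \<noteq> {}"
    and k: "cq_like (\<Omega> \<times> \<Omega>) q k"
    and Mk: "\<forall>l. set l \<subseteq> Basis \<and> length l \<le> q \<longrightarrow> (\<forall>p\<in>\<Omega> \<times> \<Omega>. \<bar>pds l k p\<bar> \<le> Mk)"
    and Cw: "\<And>v. Cq \<Omega> q v \<Longrightarrow> \<bar>integral \<Omega> v - (\<Sum>i<n. ww i * v (yy i))\<bar> \<le> Cw * hq * Cq_norm \<Omega> q v"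
    and hq: "hq \<ge> 0"
    and u: "cq_like \<Omega> q u" and x: "x \<in> \<Omega>"
  shows "\<bar>Kop \<Omega> k u x - (\<Sum>i<n. ww i * k (x, yy i) * u (yy i))\<bar>
      \<le> max Cw 0 * (real (card (multi_idx q :: ('a \<Rightarrow> nat) set)) * (2 ^ q * (Mk * fact q ^ DIM('a)))) * Cq_norm \<Omega> q u * hq"
proof -
  let ?F = "fact q ^ DIM('a) :: real"
  let ?c = "real (card (multi_idx q :: ('a \<Rightarrow> nat) set))"
  note kx = sec2_cq[OF S x k Mk]
  let ?v = "\<lambda>z. k (x, z) * u z"
  have cv: "cq_like \<Omega> q ?v" by (rule cq_like_mult(1)[OF S kx(1) u])
  have bv: "\<forall>s. set s \<subseteq> Basis \<and> length s \<le> q \<longrightarrow> (\<forall>z\<in>\<Omega>. \<bar>pds s ?v z\<bar> \<le> 2 ^ q * (Mk * (?F * Cq_norm \<Omega> q u)))"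
  proof (intro allI impI ballI)
    fix s :: "'a list" and z assume s: "set s \<subseteq> Basis \<and> length s \<le> q" and z: "z \<in> \<Omega>"
    show "\<bar>pds s ?v z\<bar> \<le> 2 ^ q * (Mk * (?F * Cq_norm \<Omega> q u))"
      by (rule cq_like_mult(2)[OF S kx(1) u]) (use s z kx(2) pds_le_Cq_norm[OF S bd ne u] in auto)
  qed
  note cn = Cq_norm_upper[OF ne bv]
  have "\<bar>integral \<Omega> ?v - (\<Sum>i<n. ww i * ?v (yy i))\<bar> \<le> Cw * hq * Cq_norm \<Omega> q ?v"
    using Cw cv by (simp add: Cq_cq_like)
  also have "\<dots> \<le> max Cw 0 * hq * Cq_norm \<Omega> q ?v"
    using cn(1) hq by (intro mult_right_mono) auto
  also have "\<dots> \<le> max Cw 0 * hq * (?c * (2 ^ q * (Mk * (?F * Cq_norm \<Omega> q u))))"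
    using cn(2) hq by (intro mult_left_mono) auto
  finally show ?thesis unfolding Kop_def by (simp add: mult_ac)
qed

lemma Kop_cont:
  fixes k :: "'a::euclidean_space \<times> 'a \<Rightarrow> real"
  assumes S: "open \<Omega>" and bd: "bounded \<Omega>"
    and kc: "continuous_on (closure \<Omega> \<times> closure \<Omega>) k" and v: "continuous_on (closure \<Omega>) v"
  shows "continuous_on (closure \<Omega>) (Kop \<Omega> k v)"
proof -
  have T: "compact (closure \<Omega>)" using bd by (simp add: compact_closure)
  have c1: "continuous_on (closure \<Omega> \<times> closure \<Omega>) (\<lambda>pz. k (fst pz, snd pz) * v (snd pz))"
    by (intro continuous_on_mult continuous_on_compose2[OF kc] continuous_on_compose2[OF v])
       (auto intro!: continuous_intros)
  show ?thesis unfolding Kop_def using integral_param_cont[OF T bd S c1] by simp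
qed

lemma rowA:
  "(\<Sum>j<n. nys_mat lam k yy ww i j * v j) = lam * v i - (\<Sum>j<n. ww j * k (yy i, yy j) * v j)"
  if "i < n"
proof -
  have "(\<Sum>j<n. nys_mat lam k yy ww i j * v j)
      = (\<Sum>j<n. (if i = j then lam * v j else 0)) - (\<Sum>j<n. ww j * k (yy i, yy j) * v j)"
  proof -
    have "nys_mat lam k yy ww i j * v j = (if i = j then lam * v j else 0) - ww j * k (yy i, yy j) * v j" for j
      unfolding nys_mat_def by (cases "i = j") (simp_all add: algebra_simps)
    then show ?thesis by (simp add: sum_subtractf)
  qed
  also have "(\<Sum>j<n. (if i = j then lam * v j else 0)) = lam * v i" using that by simp
  finally show ?thesis .
qed

lemma norm_inf_le:
  assumes n: "0 < n" and r: "\<And>i. i < n \<Longrightarrow> (\<Sum>j<n. \<bar>A i j\<bar>) \<le> B"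
  shows "norm_inf n A \<le> B" "0 \<le> norm_inf n A"
proof -
  show "norm_inf n A \<le> B" unfolding norm_inf_def using n r by (subst Max_le_iff) auto
  have "(\<Sum>j<n. \<bar>A 0 j\<bar>) \<le> norm_inf n A" unfolding norm_inf_def using n by (intro Max_ge) auto
  moreover have "0 \<le> (\<Sum>j<n. \<bar>A 0 j\<bar>)" by (rule sum_nonneg) simp
  ultimately show "0 \<le> norm_inf n A" by linarith
qed

lemma x_sgn: "(x::real) * sgn x = \<bar>x\<bar>"
  by (cases "x > 0"; cases "x < 0") auto

lemma inverse_solves:
  assumes B: "is_inverse n A B" and m: "m < n"
  shows "(\<Sum>l<n. A m l * (\<Sum>j<n. B l j * g j)) = g m"
proof -
  have "(\<Sum>l<n. A m l * (\<Sum>j<n. B l j * g j)) = (\<Sum>l<n. \<Sum>j<n. A m l * (B l j * g j))"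
    by (simp add: sum_distrib_left)
  also have "\<dots> = (\<Sum>j<n. \<Sum>l<n. A m l * (B l j * g j))" by (rule sum.swap)
  also have "\<dots> = (\<Sum>j<n. mat_mult n A B m j * g j)"
    unfolding mat_mult_def by (intro sum.cong refl) (simp add: sum_distrib_left mult_ac)
  also have "\<dots> = (\<Sum>j<n. (if m = j then g j else 0))"
    using B m unfolding is_inverse_def by (intro sum.cong) auto
  also have "\<dots> = g m" using m by simp
  finally show ?thesis .
qed

theorem proposition3p3:
  fixes \<Omega> :: "'a::euclidean_space set"
    and q :: nat and lam :: real
    and k :: "'a \<times> 'a \<Rightarrow> real"
    and N :: "real \<Rightarrow> nat" and y :: "real \<Rightarrow> nat \<Rightarrow> 'a" and w :: "real \<Rightarrow> nat \<Rightarrow> real"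
  assumes "bounded \<Omega>" and "open \<Omega>"
    and "q \<ge> 1" and "lam \<noteq> 0"
    and "Cq (\<Omega> \<times> \<Omega>) q k"
    and "not_in_spectrum \<Omega> k lam"
    and "quad_scheme \<Omega> N y" and "quad_order \<Omega> q N y w" and "quad_stable N w"
  shows "\<exists>h0>0. \<exists>C\<kappa> C. C > 0 \<and> (\<forall>h. 0 < h \<and> h < h0 \<longrightarrow>
      cond_inf (N h) (\<lambda>i j. nys_mat lam k (y h) (w h) i j) \<le> C\<kappa> \<and>
      (\<forall>f u. Cq \<Omega> q f \<and> (\<exists>x\<in>closure \<Omega>. f x \<noteq> 0) \<and> Cq \<Omega> q u \<and>
          (\<forall>x\<in>closure \<Omega>. lam * u x - Kop \<Omega> k u x = f x) \<longrightarrow>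
        (\<exists>uh. (\<forall>i<N h. lam * uh i - (\<Sum>j<N h. w h j * k (y h i, y h j) * uh j) = f (y h i)) \<and>
           (\<forall>uh'. (\<forall>i<N h. lam * uh' i - (\<Sum>j<N h. w h j * k (y h i, y h j) * uh' j) = f (y h i))
              \<longrightarrow> (\<forall>i<N h. uh' i = uh i))) \<and>
        (\<forall>uh. (\<forall>i<N h. lam * uh i - (\<Sum>j<N h. w h j * k (y h i, y h j) * uh j) = f (y h i)) \<longrightarrow>
           sup_norm \<Omega> (\<lambda>x. u x - (1 / lam) * ((\<Sum>i<N h. w h i * k (x, y h i) * uh i) + f x))
             \<le> C * h ^ q * Cq_norm \<Omega> q u)))"
proof -
  have S: "open \<Omega>" and bd: "bounded \<Omega>" and lam: "lam \<noteq> 0" and q1: "1 \<le> q" using assms by auto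
  have qs_pts: "\<forall>h>0. (\<forall>i<N h. y h i \<in> closure \<Omega>)" and lim: "filterlim N at_top (at_right 0)"
    using assms(7) unfolding quad_scheme_def by auto
  have "eventually (\<lambda>h. 1 \<le> N h) (at_right (0::real))" using lim unfolding filterlim_at_top by auto
  then obtain h1 where h1: "h1 > 0" "\<forall>h>0. h < h1 \<longrightarrow> 1 \<le> N h" unfolding eventually_at_right_field by auto
  have ne: "\<Omega> \<noteq> {}"
  proof
    assume e: "\<Omega> = {}"
    have p: "h1 / 2 > 0" "h1 / 2 < h1" using h1 by auto
    have "1 \<le> N (h1 / 2)" using h1(2) p by blast
    then have "0 < N (h1 / 2)" by simp
    then have "y (h1 / 2) 0 \<in> closure \<Omega>" using qs_pts p(1) by blast
    then show False using e by simp
  qed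
  have k: "cq_like (\<Omega> \<times> \<Omega>) q k" using assms(5) by (simp add: Cq_cq_like)
  have kc: "continuous_on (closure \<Omega> \<times> closure \<Omega>) k" using k unfolding cq_like_def by (simp add: closure_Times)
  obtain Mk where Mk: "\<forall>l. set l \<subseteq> Basis \<and> length l \<le> q \<longrightarrow> (\<forall>p\<in>\<Omega> \<times> \<Omega>. \<bar>pds l k p\<bar> \<le> Mk)"
    using cq_like_bound[OF bounded_Times[OF bd bd] k] by blast
  obtain M where M: "\<forall>x\<in>closure \<Omega>. \<forall>y\<in>closure \<Omega>. \<bar>k (x, y)\<bar> \<le> M"
  proof -
    have "compact (k ` (closure \<Omega> \<times> closure \<Omega>))" using kc bd
      by (intro compact_continuous_image compact_Times) (auto simp: compact_closure)
    then obtain B where B: "\<forall>z\<in>k ` (closure \<Omega> \<times> closure \<Omega>). norm z \<le> B"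
      using compact_imp_bounded bounded_iff by metis
    have "\<forall>x\<in>closure \<Omega>. \<forall>y\<in>closure \<Omega>. \<bar>k (x, y)\<bar> \<le> B" using B by auto
    then show ?thesis using that by blast
  qed
  obtain CQ where CQ: "\<forall>h>0. (\<Sum>i<N h. \<bar>w h i\<bar>) \<le> CQ" using assms(9) unfolding quad_stable_def by blast
  obtain Cw where Cw: "\<forall>h>0. \<forall>v. Cq \<Omega> q v \<longrightarrow>
      \<bar>integral \<Omega> v - (\<Sum>i<N h. w h i * v (y h i))\<bar> \<le> Cw * h ^ q * Cq_norm \<Omega> q v"
    using assms(8) unfolding quad_order_def by blast
  obtain Cs where Cs: "\<forall>v. continuous_on (closure \<Omega>) v \<longrightarrow>
      sup_norm \<Omega> v \<le> Cs * sup_norm \<Omega> (\<lambda>x. lam * v x - Kop \<Omega> k v x)"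
    using assms(6) unfolding not_in_spectrum_def by blast
  define Cs' where "Cs' = max Cs 0"
  obtain z0 where z0: "z0 \<in> \<Omega>" using ne by blast
  have z0c: "z0 \<in> closure \<Omega>" using z0 closure_subset by blast
  have Cs': "\<forall>v. continuous_on (closure \<Omega>) v \<longrightarrow>
      sup_norm \<Omega> v \<le> Cs' * sup_norm \<Omega> (\<lambda>x. lam * v x - Kop \<Omega> k v x)"
  proof (intro allI impI)
    fix v :: "'a \<Rightarrow> real" assume v: "continuous_on (closure \<Omega>) v"
    have rc: "continuous_on (closure \<Omega>) (\<lambda>x. lam * v x - Kop \<Omega> k v x)"
      using Kop_cont[OF S bd kc v] v by (intro continuous_intros) auto
    have "\<bar>lam * v z0 - Kop \<Omega> k v z0\<bar> \<le> sup_norm \<Omega> (\<lambda>x. lam * v x - Kop \<Omega> k v x)"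
      by (rule sup_norm_ge[OF bd rc z0c])
    then have s0: "0 \<le> sup_norm \<Omega> (\<lambda>x. lam * v x - Kop \<Omega> k v x)" by linarith
    have "Cs * sup_norm \<Omega> (\<lambda>x. lam * v x - Kop \<Omega> k v x) \<le> Cs' * sup_norm \<Omega> (\<lambda>x. lam * v x - Kop \<Omega> k v x)"
      unfolding Cs'_def using s0 by (intro mult_right_mono) auto
    moreover have "sup_norm \<Omega> v \<le> Cs * sup_norm \<Omega> (\<lambda>x. lam * v x - Kop \<Omega> k v x)" using Cs v by blast
    ultimately show "sup_norm \<Omega> v \<le> Cs' * sup_norm \<Omega> (\<lambda>x. lam * v x - Kop \<Omega> k v x)" by linarith
  qed
  have Cs'0: "0 \<le> Cs'" unfolding Cs'_def by simp
  have "0 \<le> (\<Sum>i<N 1. \<bar>w 1 i\<bar>)" by (rule sum_nonneg) simp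
  moreover have "(\<Sum>i<N 1. \<bar>w 1 i\<bar>) \<le> CQ" using CQ[rule_format, of "1::real"] by simp
  ultimately have CQ0: "0 \<le> CQ" by linarith
  have "\<bar>k (z0, z0)\<bar> \<le> M" using M z0c by blast
  then have M0: "0 \<le> M" by linarith
  define Cw' where "Cw' = max Cw 0"
  define cd where "cd = real (card (multi_idx q :: ('a \<Rightarrow> nat) set))"
  define F where "F = (fact q ^ DIM('a) :: real)"
  define C1 where "C1 = Cw' * (cd * (2 ^ q * (Mk * Mk)))"
  have mk2: "0 \<le> Mk * Mk" by simp
  have C10: "0 \<le> C1" unfolding C1_def Cw'_def cd_def
    by (rule mult_nonneg_nonneg[OF _ mult_nonneg_nonneg[OF _ mult_nonneg_nonneg[OF _ mk2]]]) auto
  define c where "c = Cs' * CQ * C1"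
  have c0: "0 \<le> c" unfolding c_def using Cs'0 CQ0 C10 by simp
  define h2 where "h2 = min 1 (\<bar>lam\<bar> / (2 * (c + 1)))"
  define h0 where "h0 = min h1 h2"
  define D where "D = 2 * (1 + Cs' * M * CQ) / \<bar>lam\<bar>"
  define C\<kappa> where "C\<kappa> = (\<bar>lam\<bar> + M * CQ) * D"
  define C2 where "C2 = Cw' * (cd * (2 ^ q * (Mk * F)))"
  define C where "C = \<bar>C2\<bar> * (1 + M * CQ * D) / \<bar>lam\<bar> + 1"
  have lp: "0 < \<bar>lam\<bar>" using lam by simp
  have D0: "0 \<le> D" unfolding D_def using Cs'0 M0 CQ0 by simp
  have h0pos: "h0 > 0" unfolding h0_def h2_def using h1 lp c0 by simp
  have Cpos: "C > 0"
  proof -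
    have "0 \<le> \<bar>C2\<bar> * (1 + M * CQ * D) / \<bar>lam\<bar>" using M0 CQ0 D0 by simp
    then show ?thesis unfolding C_def by linarith
  qed
  have main: "\<forall>h. 0 < h \<and> h < h0 \<longrightarrow>
      cond_inf (N h) (\<lambda>i j. nys_mat lam k (y h) (w h) i j) \<le> C\<kappa> \<and>
      (\<forall>f u. Cq \<Omega> q f \<and> (\<exists>x\<in>closure \<Omega>. f x \<noteq> 0) \<and> Cq \<Omega> q u \<and>
          (\<forall>x\<in>closure \<Omega>. lam * u x - Kop \<Omega> k u x = f x) \<longrightarrow>
        (\<exists>uh. (\<forall>i<N h. lam * uh i - (\<Sum>j<N h. w h j * k (y h i, y h j) * uh j) = f (y h i)) \<and>
           (\<forall>uh'. (\<forall>i<N h. lam * uh' i - (\<Sum>j<N h. w h j * k (y h i, y h j) * uh' j) = f (y h i))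
              \<longrightarrow> (\<forall>i<N h. uh' i = uh i))) \<and>
        (\<forall>uh. (\<forall>i<N h. lam * uh i - (\<Sum>j<N h. w h j * k (y h i, y h j) * uh j) = f (y h i)) \<longrightarrow>
           sup_norm \<Omega> (\<lambda>x. u x - (1 / lam) * ((\<Sum>i<N h. w h i * k (x, y h i) * uh i) + f x))
             \<le> C * h ^ q * Cq_norm \<Omega> q u))"
  proof (intro allI impI)
    fix h :: real assume h: "0 < h \<and> h < h0"
    define n where "n = N h"
    have n1: "1 \<le> n" unfolding n_def using h1 h unfolding h0_def by auto
    have yin: "\<forall>i<n. y h i \<in> closure \<Omega>" unfolding n_def using qs_pts h by auto
    have CQh: "(\<Sum>i<n. \<bar>w h i\<bar>) \<le> CQ" unfolding n_def using CQ h by auto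
    have Cwh: "\<And>v. Cq \<Omega> q v \<Longrightarrow> \<bar>integral \<Omega> v - (\<Sum>i<n. w h i * v (y h i))\<bar> \<le> Cw * h ^ q * Cq_norm \<Omega> q v"
      unfolding n_def using Cw h by auto
    have hq0: "0 \<le> h ^ q" using h by simp
    have E: "\<forall>x\<in>closure \<Omega>. \<forall>y'\<in>closure \<Omega>.
       \<bar>integral \<Omega> (\<lambda>z. k (x, z) * k (z, y')) - (\<Sum>i<n. w h i * (k (x, y h i) * k (y h i, y')))\<bar> \<le> C1 * h ^ q"
      using quad_err_kk[OF S bd ne k Mk Cwh hq0 yin] unfolding C1_def Cw'_def cd_def by simp
    have small: "Cs' * CQ * (C1 * h ^ q) \<le> \<bar>lam\<bar> / 2"
    proof -
      have hle1: "h \<le> 1" using h unfolding h0_def h2_def by simp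
      have hle: "h \<le> \<bar>lam\<bar> / (2 * (c + 1))" using h unfolding h0_def h2_def by simp
      have "h ^ q \<le> h ^ 1" using h hle1 q1 by (intro power_decreasing) auto
      then have "c * h ^ q \<le> c * h" using c0 by (simp add: mult_left_mono)
      also have "\<dots> \<le> (c + 1) * h" using h by (simp add: algebra_simps)
      also have "\<dots> \<le> (c + 1) * (\<bar>lam\<bar> / (2 * (c + 1)))" using hle c0 by (intro mult_left_mono) auto
      also have "\<dots> = \<bar>lam\<bar> / 2"
      proof -
        have "2 * c + 2 \<noteq> 0" "c + 1 \<noteq> 0" using c0 by linarith+
        then show ?thesis by (simp add: field_simps)
      qed
      finally show ?thesis unfolding c_def by (simp add: mult_ac)
    qed
    have STAB: "\<forall>i<n. \<bar>v i\<bar> \<le> D * G"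
      if sol: "\<forall>i<n. lam * v i - (\<Sum>j<n. w h j * k (y h i, y h j) * v j) = g i"
        and G: "\<forall>i<n. \<bar>g i\<bar> \<le> G" for v g G
      using stab[OF S bd ne kc M yin CQh E Cs' Cs'0 lam small sol G] unfolding D_def by simp
    define A where "A = (\<lambda>i j. nys_mat lam k (y h) (w h) i j)"
    have rA: "(\<Sum>j<n. A i j * v j) = lam * v i - (\<Sum>j<n. w h j * k (y h i, y h j) * v j)" if "i < n" for i v
      unfolding A_def by (rule rowA[OF that])
    have "\<exists>B. is_inverse n A B"
    proof (rule inj_imp_inverse)
      fix v assume v: "\<forall>i<n. (\<Sum>j<n. A i j * v j) = 0"
      have "\<forall>i<n. \<bar>v i\<bar> \<le> D * 0"
        by (rule STAB[where g = "\<lambda>_. 0"]) (use v rA in auto)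
      then show "\<forall>i<n. v i = 0" by auto
    qed
    then have isB: "is_inverse n A (SOME B. is_inverse n A B)" by (rule someI_ex)
    define B0 where "B0 = (SOME B. is_inverse n A B)"
    have isB0: "is_inverse n A B0" using isB unfolding B0_def .
    have solveB: "lam * (\<Sum>j<n. B0 l j * g j) - (\<Sum>l'<n. w h l' * k (y h l, y h l') * (\<Sum>j<n. B0 l' j * g j)) = g l"
      if l: "l < n" for l g
      using inverse_solves[OF isB0 l, of g] rA[OF l, of "\<lambda>l. \<Sum>j<n. B0 l j * g j"] by simp
    have nA: "norm_inf n A \<le> \<bar>lam\<bar> + M * CQ" "0 \<le> norm_inf n A"
    proof -
      have r: "(\<Sum>j<n. \<bar>A i j\<bar>) \<le> \<bar>lam\<bar> + M * CQ" if i: "i < n" for i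
      proof -
        have "(\<Sum>j<n. \<bar>A i j\<bar>) \<le> (\<Sum>j<n. (if i = j then \<bar>lam\<bar> else 0) + M * \<bar>w h j\<bar>)"
        proof (rule sum_mono)
          fix j assume j: "j \<in> {..<n}"
          have kb: "\<bar>k (y h i, y h j)\<bar> \<le> M" using M yin i j by auto
          have "\<bar>k (y h i, y h j) * w h j\<bar> \<le> M * \<bar>w h j\<bar>"
            unfolding abs_mult using kb by (intro mult_right_mono) auto
          then show "\<bar>A i j\<bar> \<le> (if i = j then \<bar>lam\<bar> else 0) + M * \<bar>w h j\<bar>"
            unfolding A_def nys_mat_def by (cases "i = j") auto
        qed
        also have "\<dots> = \<bar>lam\<bar> + M * (\<Sum>j<n. \<bar>w h j\<bar>)" using i by (simp add: sum.distrib sum_distrib_left)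
        also have "\<dots> \<le> \<bar>lam\<bar> + M * CQ" using CQh M0 by (simp add: mult_left_mono)
        finally show ?thesis .
      qed
      show "norm_inf n A \<le> \<bar>lam\<bar> + M * CQ" "0 \<le> norm_inf n A" using norm_inf_le[of n A] n1 r by auto
    qed
    have nB: "norm_inf n B0 \<le> D" "0 \<le> norm_inf n B0"
    proof -
      have r: "(\<Sum>j<n. \<bar>B0 i j\<bar>) \<le> D" if i: "i < n" for i
      proof -
        define g where "g = (\<lambda>j. sgn (B0 i j))"
        define v where "v = (\<lambda>l. \<Sum>j<n. B0 l j * g j)"
        have "\<forall>i<n. \<bar>v i\<bar> \<le> D * 1"
        proof (rule STAB)
          show "\<forall>i<n. lam * v i - (\<Sum>j<n. w h j * k (y h i, y h j) * v j) = g i"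
            unfolding v_def by (intro allI impI solveB)
          show "\<forall>i<n. \<bar>g i\<bar> \<le> 1" 
          proof (intro allI impI)
            fix j :: nat
            show "\<bar>g j\<bar> \<le> 1" unfolding g_def by (cases "B0 i j > 0"; cases "B0 i j < 0") auto
          qed
        qed
        moreover have "v i = (\<Sum>j<n. \<bar>B0 i j\<bar>)" unfolding v_def g_def by (simp add: x_sgn)
        ultimately show ?thesis using i by auto
      qed
      show "norm_inf n B0 \<le> D" "0 \<le> norm_inf n B0" using norm_inf_le[of n B0] n1 r by auto
    qed
    have "cond_inf n A = norm_inf n A * norm_inf n B0" unfolding cond_inf_def B0_def ..
    also have "\<dots> \<le> (\<bar>lam\<bar> + M * CQ) * D" using nA nB M0 CQ0 by (intro mult_mono) auto
    finally have cond: "cond_inf n A \<le> C\<kappa>" unfolding C\<kappa>_def .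
    have part2: "(\<exists>uh. (\<forall>i<n. lam * uh i - (\<Sum>j<n. w h j * k (y h i, y h j) * uh j) = f (y h i)) \<and>
           (\<forall>uh'. (\<forall>i<n. lam * uh' i - (\<Sum>j<n. w h j * k (y h i, y h j) * uh' j) = f (y h i))
              \<longrightarrow> (\<forall>i<n. uh' i = uh i))) \<and>
        (\<forall>uh. (\<forall>i<n. lam * uh i - (\<Sum>j<n. w h j * k (y h i, y h j) * uh j) = f (y h i)) \<longrightarrow>
           sup_norm \<Omega> (\<lambda>x. u x - (1 / lam) * ((\<Sum>i<n. w h i * k (x, y h i) * uh i) + f x))
             \<le> C * h ^ q * Cq_norm \<Omega> q u)"
      if fu: "Cq \<Omega> q f \<and> (\<exists>x\<in>closure \<Omega>. f x \<noteq> 0) \<and> Cq \<Omega> q u \<and>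
          (\<forall>x\<in>closure \<Omega>. lam * u x - Kop \<Omega> k u x = f x)" for f u
    proof
      define uh0 where "uh0 = (\<lambda>l. \<Sum>j<n. B0 l j * f (y h j))"
      have sol0: "\<forall>i<n. lam * uh0 i - (\<Sum>j<n. w h j * k (y h i, y h j) * uh0 j) = f (y h i)"
        unfolding uh0_def by (intro allI impI solveB)
      have uniq: "\<forall>i<n. uh' i = uh0 i"
        if s': "\<forall>i<n. lam * uh' i - (\<Sum>j<n. w h j * k (y h i, y h j) * uh' j) = f (y h i)" for uh'
      proof -
        have "\<forall>i<n. \<bar>uh' i - uh0 i\<bar> \<le> D * 0"
        proof (rule STAB)
          show "\<forall>i<n. lam * (uh' i - uh0 i) - (\<Sum>j<n. w h j * k (y h i, y h j) * (uh' j - uh0 j)) = 0"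
          proof (intro allI impI)
            fix i assume i: "i < n"
            have "(\<Sum>j<n. w h j * k (y h i, y h j) * (uh' j - uh0 j))
              = (\<Sum>j<n. w h j * k (y h i, y h j) * uh' j) - (\<Sum>j<n. w h j * k (y h i, y h j) * uh0 j)"
              by (simp add: right_diff_distrib sum_subtractf)
            moreover have "lam * uh' i - (\<Sum>j<n. w h j * k (y h i, y h j) * uh' j) = f (y h i)" using s' i by blast
            moreover have "lam * uh0 i - (\<Sum>j<n. w h j * k (y h i, y h j) * uh0 j) = f (y h i)" using sol0 i by blast
            moreover have "lam * (uh' i - uh0 i) = lam * uh' i - lam * uh0 i" by (simp add: right_diff_distrib)
            ultimately show "lam * (uh' i - uh0 i) - (\<Sum>j<n. w h j * k (y h i, y h j) * (uh' j - uh0 j)) = 0"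
              by linarith
          qed
        qed auto
        then show ?thesis by auto
      qed
      show "\<exists>uh. (\<forall>i<n. lam * uh i - (\<Sum>j<n. w h j * k (y h i, y h j) * uh j) = f (y h i)) \<and>
           (\<forall>uh'. (\<forall>i<n. lam * uh' i - (\<Sum>j<n. w h j * k (y h i, y h j) * uh' j) = f (y h i))
              \<longrightarrow> (\<forall>i<n. uh' i = uh i))"
        using sol0 uniq by blast
    next
      have u: "cq_like \<Omega> q u" using fu by (simp add: Cq_cq_like)
      have fc: "continuous_on (closure \<Omega>) f" using fu unfolding Cq_def by blast
      have uc: "continuous_on (closure \<Omega>) u" using u unfolding cq_like_def by blast
      have fe: "\<forall>x\<in>closure \<Omega>. lam * u x - Kop \<Omega> k u x = f x" using fu by blast
      obtain Mu where Mu: "\<forall>l. set l \<subseteq> Basis \<and> length l \<le> q \<longrightarrow> (\<forall>z\<in>\<Omega>. \<bar>pds l u z\<bar> \<le> Mu)"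
        using cq_like_bound[OF bd u] by blast
      have Cqn0: "0 \<le> Cq_norm \<Omega> q u" by (rule Cq_norm_upper(1)[OF ne Mu])
      define X where "X = \<bar>C2\<bar> * Cq_norm \<Omega> q u * h ^ q"
      have X0: "0 \<le> X" unfolding X_def using Cqn0 hq0 by simp
      define T where "T = (\<lambda>x. lam * u x - f x - (\<Sum>i<n. w h i * k (x, y h i) * u (y h i)))"
      have Tc: "continuous_on (closure \<Omega>) T" unfolding T_def using yin
        by (intro continuous_intros fc uc continuous_on_mult_left continuous_on_mult_right k_cont1[OF kc]) auto
      have Ti: "\<bar>T x\<bar> \<le> X" if x: "x \<in> \<Omega>" for x
      proof -
        have xc: "x \<in> closure \<Omega>" using x closure_subset by blast
        have fx: "lam * u x - Kop \<Omega> k u x = f x" using fe xc by blast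
        have "T x = Kop \<Omega> k u x - (\<Sum>i<n. w h i * k (x, y h i) * u (y h i))"
          unfolding T_def using fx by linarith
        then have "\<bar>T x\<bar> \<le> C2 * Cq_norm \<Omega> q u * h ^ q"
          using quad_err_ku[OF S bd ne k Mk Cwh hq0 u x] unfolding C2_def Cw'_def cd_def F_def by simp
        also have "\<dots> \<le> X" unfolding X_def using Cqn0 hq0 by (intro mult_right_mono) auto
        finally show ?thesis .
      qed
      have Tb: "\<bar>T x\<bar> \<le> X" if x: "x \<in> closure \<Omega>" for x
        by (rule bound_closure[OF Tc Ti x])
      show "\<forall>uh. (\<forall>i<n. lam * uh i - (\<Sum>j<n. w h j * k (y h i, y h j) * uh j) = f (y h i)) \<longrightarrow>
           sup_norm \<Omega> (\<lambda>x. u x - (1 / lam) * ((\<Sum>i<n. w h i * k (x, y h i) * uh i) + f x))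
             \<le> C * h ^ q * Cq_norm \<Omega> q u"
      proof (intro allI impI)
        fix uh assume sol: "\<forall>i<n. lam * uh i - (\<Sum>j<n. w h j * k (y h i, y h j) * uh j) = f (y h i)"
        define \<epsilon> where "\<epsilon> = (\<lambda>i. u (y h i) - uh i)"
        have \<epsilon>b: "\<forall>i<n. \<bar>\<epsilon> i\<bar> \<le> D * X"
        proof (rule STAB)
          show "\<forall>i<n. lam * \<epsilon> i - (\<Sum>j<n. w h j * k (y h i, y h j) * \<epsilon> j) = T (y h i)"
          proof (intro allI impI)
            fix i assume i: "i < n"
            have "(\<Sum>j<n. w h j * k (y h i, y h j) * \<epsilon> j)
              = (\<Sum>j<n. w h j * k (y h i, y h j) * u (y h j)) - (\<Sum>j<n. w h j * k (y h i, y h j) * uh j)"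
              unfolding \<epsilon>_def by (simp add: right_diff_distrib sum_subtractf)
            moreover have "lam * uh i - (\<Sum>j<n. w h j * k (y h i, y h j) * uh j) = f (y h i)" using sol i by blast
            ultimately show "lam * \<epsilon> i - (\<Sum>j<n. w h j * k (y h i, y h j) * \<epsilon> j) = T (y h i)"
              unfolding T_def \<epsilon>_def by (simp add: right_diff_distrib)
          qed
          show "\<forall>i<n. \<bar>T (y h i)\<bar> \<le> X" using Tb yin by blast
        qed
        show "sup_norm \<Omega> (\<lambda>x. u x - (1 / lam) * ((\<Sum>i<n. w h i * k (x, y h i) * uh i) + f x))
             \<le> C * h ^ q * Cq_norm \<Omega> q u"
        proof (rule sup_norm_le[OF ne])
          fix x assume x: "x \<in> closure \<Omega>"
          let ?e = "u x - (1 / lam) * ((\<Sum>i<n. w h i * k (x, y h i) * uh i) + f x)"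
          have "lam * ?e = lam * u x - ((\<Sum>i<n. w h i * k (x, y h i) * uh i) + f x)"
            using lam by (simp add: right_diff_distrib)
          also have "\<dots> = T x + (\<Sum>i<n. w h i * k (x, y h i) * \<epsilon> i)"
            unfolding T_def \<epsilon>_def by (simp add: right_diff_distrib sum_subtractf)
          finally have le: "lam * ?e = T x + (\<Sum>i<n. w h i * k (x, y h i) * \<epsilon> i)" .
          have sb: "\<bar>\<Sum>i<n. w h i * k (x, y h i) * \<epsilon> i\<bar> \<le> CQ * (M * (D * X))"
          proof -
            have "\<bar>\<Sum>i<n. w h i * k (x, y h i) * \<epsilon> i\<bar> \<le> (\<Sum>i<n. \<bar>w h i\<bar> * (M * (D * X)))"
            proof (rule order_trans[OF sum_abs], rule sum_mono)
              fix i assume i: "i \<in> {..<n}"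
              have k1: "\<bar>k (x, y h i)\<bar> \<le> M" using M x yin i by blast
              have e1: "\<bar>\<epsilon> i\<bar> \<le> D * X" using \<epsilon>b i by blast
              have "\<bar>k (x, y h i)\<bar> * \<bar>\<epsilon> i\<bar> \<le> M * (D * X)" using k1 e1 M0 by (intro mult_mono) auto
              then have "\<bar>w h i\<bar> * (\<bar>k (x, y h i)\<bar> * \<bar>\<epsilon> i\<bar>) \<le> \<bar>w h i\<bar> * (M * (D * X))"
                by (intro mult_left_mono) auto
              then show "\<bar>w h i * k (x, y h i) * \<epsilon> i\<bar> \<le> \<bar>w h i\<bar> * (M * (D * X))"
                by (simp add: abs_mult mult.assoc)
            qed
            also have "\<dots> = (\<Sum>i<n. \<bar>w h i\<bar>) * (M * (D * X))" by (simp add: sum_distrib_right)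
            also have "\<dots> \<le> CQ * (M * (D * X))" using CQh M0 D0 X0 by (intro mult_right_mono) auto
            finally show ?thesis .
          qed
          have "\<bar>lam\<bar> * \<bar>?e\<bar> \<le> X + CQ * (M * (D * X))"
          proof -
            have "\<bar>lam\<bar> * \<bar>?e\<bar> = \<bar>T x + (\<Sum>i<n. w h i * k (x, y h i) * \<epsilon> i)\<bar>" using le by (metis abs_mult)
            also have "\<dots> \<le> \<bar>T x\<bar> + \<bar>\<Sum>i<n. w h i * k (x, y h i) * \<epsilon> i\<bar>" by (rule abs_triangle_ineq)
            finally show ?thesis using Tb[OF x] sb by linarith
          qed
          also have "X + CQ * (M * (D * X)) = \<bar>lam\<bar> * (\<bar>C2\<bar> * (1 + M * CQ * D) / \<bar>lam\<bar> * (h ^ q * Cq_norm \<Omega> q u))"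
            unfolding X_def using lp by (simp add: field_simps)
          finally have fin: "\<bar>lam\<bar> * \<bar>?e\<bar> \<le> \<bar>lam\<bar> * (\<bar>C2\<bar> * (1 + M * CQ * D) / \<bar>lam\<bar> * (h ^ q * Cq_norm \<Omega> q u))" .
          have "\<bar>?e\<bar> \<le> \<bar>C2\<bar> * (1 + M * CQ * D) / \<bar>lam\<bar> * (h ^ q * Cq_norm \<Omega> q u)"
            by (rule mult_left_le_imp_le[OF fin lp])
          also have "\<dots> \<le> C * (h ^ q * Cq_norm \<Omega> q u)"
            unfolding C_def using hq0 Cqn0 by (intro mult_right_mono) auto
          finally show "\<bar>?e\<bar> \<le> C * h ^ q * Cq_norm \<Omega> q u" by (simp add: mult.assoc)
        qed
      qed
    qed
    show "cond_inf (N h) (\<lambda>i j. nys_mat lam k (y h) (w h) i j) \<le> C\<kappa> \<and>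
      (\<forall>f u. Cq \<Omega> q f \<and> (\<exists>x\<in>closure \<Omega>. f x \<noteq> 0) \<and> Cq \<Omega> q u \<and>
          (\<forall>x\<in>closure \<Omega>. lam * u x - Kop \<Omega> k u x = f x) \<longrightarrow>
        (\<exists>uh. (\<forall>i<N h. lam * uh i - (\<Sum>j<N h. w h j * k (y h i, y h j) * uh j) = f (y h i)) \<and>
           (\<forall>uh'. (\<forall>i<N h. lam * uh' i - (\<Sum>j<N h. w h j * k (y h i, y h j) * uh' j) = f (y h i))
              \<longrightarrow> (\<forall>i<N h. uh' i = uh i))) \<and>
        (\<forall>uh. (\<forall>i<N h. lam * uh i - (\<Sum>j<N h. w h j * k (y h i, y h j) * uh j) = f (y h i)) \<longrightarrow>
           sup_norm \<Omega> (\<lambda>x. u x - (1 / lam) * ((\<Sum>i<N h. w h i * k (x, y h i) * uh i) + f x))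
             \<le> C * h ^ q * Cq_norm \<Omega> q u))"
      apply (rule conjI)
       apply (rule cond[unfolded n_def A_def])
      apply (intro allI impI)
      apply (rule part2[unfolded n_def])
      apply assumption
      done
  qed
  show ?thesis
    apply (rule exI[of _ h0])
    apply (rule conjI[OF h0pos])
    apply (rule exI[of _ C\<kappa>])
    apply (rule exI[of _ C])
    apply (rule conjI[OF Cpos])
    apply (rule main)
    done
qed

end
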